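(* Let $\mathfrak a=\mathbb H^p$, $\mathfrak z$ a $3$-dimensional real vector space, $A_s:\mathfrak z\to\mathrm{Im}\,\mathbb H$ ($s=1,\dots,p$) linear isomorphisms, $J_Z=\mathrm{diag}(L_{A_1Z},\dots,L_{A_pZ})$, $V=\{J_Z:Z\in\mathfrak z\}$, and suppose $(V,\langle\cdot,\cdot\rangle)$ is a WS-pair for some inner product. Then after an orthogonal change of coordinates in each factor $\mathbb H$ of $\mathbb H^p$ (by maps commuting with right multiplications), $V=\mathrm{Span}(J_1,J_2,J_3)$ with $J_1=\mathrm{diag}(\lambda_1L_{\mathrm i},\dots,\lambda_pL_{\mathrm i})$, $J_2=\mathrm{diag}(\mu_1L_{\mathrm j},\dots,\mu_pL_{\mathrm j})$, $J_3=\mathrm{diag}(\mu_1L_{\mathrm k},\dots,\mu_pL_{\mathrm k})$ for nonzero reals $\lambda_s,\mu_s$, and the inner product satisfies $J_1\perp J_2$, $J_1\perp J_3$, $J_2\perp J_3$ and $\|J_2\|=\|J_3\|$.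
   Context: $\mathbb H$ denotes the quaternions, $\mathrm i,\mathrm j,\mathrm k$ the standard basis of $\mathrm{Im}\,\mathbb H$, $L_q$ left multiplication, $\mathrm{diag}$ block-diagonal operators on $\mathbb H^p$. For a Euclidean space $\mathfrak a$, a subspace $V\subset\mathfrak{so}(\mathfrak a)$ with inner product $\langle\cdot,\cdot\rangle$ defines the metric 2-step nilpotent Lie algebra $\mathfrak n=V\oplus\mathfrak a$ (orthogonal sum, $V$ central, $\langle J,[X,Y]\rangle=\langle JX,Y\rangle$); it is a WS-pair if the corresponding simply connected nilpotent Lie group with left-invariant metric is weakly symmetric. Standing fact: this holds iff for every $J\in V$, $X\in\mathfrak a$ there is $N\in\mathcal N(V)=\{N\in O(\mathfrak a): NVN^{-1}\subset V$, $K\mapsto NKN^{-1}$ orthogonal on $(V,\langle\cdot,\cdot\rangle)\}$ with $NX=-X$, $NJ=-JN$. *)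

theory Defs
  imports "HOL-Analysis.Analysis"
begin

text \<open>Quaternions modelled as real^4 with components 1,2,3,4 = (re, i, j, k);
  the Euclidean inner product on real^4 is the standard inner product of H.\<close>

definition qmult :: "real^4 \<Rightarrow> real^4 \<Rightarrow> real^4" where
  "qmult x y = vector
     [x$1*y$1 - x$2*y$2 - x$3*y$3 - x$4*y$4,
      x$1*y$2 + x$2*y$1 + x$3*y$4 - x$4*y$3,
      x$1*y$3 - x$2*y$4 + x$3*y$1 + x$4*y$2,
      x$1*y$4 + x$2*y$3 - x$3*y$2 + x$4*y$1]"

definition qi :: "real^4" where "qi = vector [0, 1, 0, 0]"
definition qj :: "real^4" where "qj = vector [0, 0, 1, 0]"
definition qk :: "real^4" where "qk = vector [0, 0, 0, 1]"

definition ImH :: "(real^4) set" where "ImH = {q. q$1 = 0}"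

definition Lq :: "real^4 \<Rightarrow> real^4 \<Rightarrow> real^4" where "Lq q x = qmult q x"

definition qdiag :: "('p::finite \<Rightarrow> real^4 \<Rightarrow> real^4) \<Rightarrow> real^4^'p \<Rightarrow> real^4^'p" where
  "qdiag f x = (\<chi> s. f s (x$s))"

definition inner_product_on :: "('a::real_vector \<Rightarrow> 'a) set \<Rightarrow> (('a \<Rightarrow> 'a) \<Rightarrow> ('a \<Rightarrow> 'a) \<Rightarrow> real) \<Rightarrow> bool" where
  "inner_product_on V ip \<longleftrightarrow>
     (\<forall>J\<in>V. \<forall>K\<in>V. ip J K = ip K J) \<and>
     (\<forall>J\<in>V. \<forall>K\<in>V. \<forall>L\<in>V. ip (\<lambda>x. J x + K x) L = ip J L + ip K L) \<and>
     (\<forall>J\<in>V. \<forall>K\<in>V. \<forall>c::real. ip (\<lambda>x. c *\<^sub>R J x) K = c * ip J K) \<and>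
     (\<forall>J\<in>V. J \<noteq> (\<lambda>x. 0) \<longrightarrow> ip J J > 0)"

definition NV :: "('a::real_inner \<Rightarrow> 'a) set \<Rightarrow> (('a \<Rightarrow> 'a) \<Rightarrow> ('a \<Rightarrow> 'a) \<Rightarrow> real) \<Rightarrow> ('a \<Rightarrow> 'a) set" where
  "NV V ip = {N. orthogonal_transformation N \<and>
      (\<forall>K\<in>V. N \<circ> K \<circ> inv N \<in> V) \<and>
      (\<forall>K\<in>V. \<forall>L\<in>V. ip (N \<circ> K \<circ> inv N) (N \<circ> L \<circ> inv N) = ip K L)}"

text \<open>WS-pair, via the standing characterization of weak symmetry.\<close>
definition WS_pair :: "('a::real_inner \<Rightarrow> 'a) set \<Rightarrow> (('a \<Rightarrow> 'a) \<Rightarrow> ('a \<Rightarrow> 'a) \<Rightarrow> real) \<Rightarrow> bool" where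
  "WS_pair V ip \<longleftrightarrow>
     (\<forall>J\<in>V. \<forall>X. \<exists>N\<in>NV V ip. N X = - X \<and> N \<circ> J = (\<lambda>x. - J (N x)))"

end

theory Submission
  imports Defs "HOL-Analysis.Cross3"
begin


lemma frame_expand:
  fixes a b c x :: "real^3"
  assumes "a\<bullet>a = 1" "b\<bullet>b = 1" "c\<bullet>c = 1" "a\<bullet>b = 0" "a\<bullet>c = 0" "b\<bullet>c = 0"
  shows "x = (x\<bullet>a) *\<^sub>R a + (x\<bullet>b) *\<^sub>R b + (x\<bullet>c) *\<^sub>R c"
proof -
  define y where "y = x - ((x\<bullet>a) *\<^sub>R a + (x\<bullet>b) *\<^sub>R b + (x\<bullet>c) *\<^sub>R c)"
  have ya: "y\<bullet>a = 0" "y\<bullet>b = 0" "y\<bullet>c = 0" using assms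
    by (auto simp: y_def inner_diff_left inner_add_left inner_commute[of b a] inner_commute[of c a] inner_commute[of c b])
  have ne: "a \<noteq> b" "a \<noteq> c" "b \<noteq> c" "a\<noteq>0" "b\<noteq>0" "c\<noteq>0" using assms by auto
  have ind: "independent {a,b,c}"
    apply (rule pairwise_orthogonal_independent)
    using assms ne by (auto simp: pairwise_def orthogonal_def inner_commute)
  have card: "card {a,b,c} = 3" using ne by auto
  have "UNIV \<subseteq> span {a,b,c}"
    apply (rule card_ge_dim_independent) using ind card by auto
  hence "y \<in> span {a,b,c}" by auto
  hence "orthogonal y y"
    by (rule orthogonal_to_span) (use ya in \<open>auto simp: orthogonal_def\<close>)
  hence "y = 0" by (simp add: orthogonal_self)
  thus ?thesis by (simp add: y_def)
qed


lemma cross_triple: "cross3 a (cross3 b c) = (a\<bullet>c) *\<^sub>R b - (a\<bullet>b) *\<^sub>R c"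
  by (simp add: cross3_def inner_vec_def sum_3 vec_eq_iff forall_3 vector_def algebra_simps)

lemma cross_scal_triple: "cross3 a b \<bullet> c = a \<bullet> cross3 b c"
  by (simp add: cross3_simps)

lemma norm_cross_sq: "cross3 a b \<bullet> cross3 a b = (a\<bullet>a)*(b\<bullet>b) - (a\<bullet>b)^2"
  by (simp add: cross3_simps power2_eq_square)

lemma exists_orth_unit:
  fixes u :: "real^3" assumes "u \<noteq> 0"
  shows "\<exists>v. v\<bullet>v = 1 \<and> v\<bullet>u = 0"
proof -
  have "\<exists>w. w \<noteq> 0 \<and> w\<bullet>u = 0"
  proof (cases "cross3 u (axis 1 1) = 0")
    case False thus ?thesis by (intro exI[of _ "cross3 u (axis 1 1)"]) (simp add: dot_cross_self)
  next
    case True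
    have "cross3 u (axis 2 1) \<noteq> 0"
    proof
      assume "cross3 u (axis 2 1) = 0"
      with True have "u$1 = 0 \<and> u$2 = 0 \<and> u$3 = 0"
        by (auto simp: cross3_def vec_eq_iff forall_3 vector_def axis_def)
      with assms show False by (auto simp: vec_eq_iff forall_3)
    qed
    thus ?thesis by (intro exI[of _ "cross3 u (axis 2 1)"]) (simp add: dot_cross_self)
  qed
  then obtain w where w: "w \<noteq> 0" "w\<bullet>u = 0" by blast
  show ?thesis
    apply (rule exI[of _ "w /\<^sub>R norm w"])
    using w by (simp add: inner_commute dot_square_norm power2_eq_square)
qed

lemma inner_pres_linear:
  fixes t :: "'a::real_inner \<Rightarrow> 'a"
  assumes inn: "\<And>a b. t a \<bullet> t b = a \<bullet> b"
  shows "linear t"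
proof
  fix a b
  have "(t (a+b) - t a - t b) \<bullet> (t (a+b) - t a - t b) = ((a+b) - a - b) \<bullet> ((a+b) - a - b)"
    by (simp only: inner_diff_left inner_diff_right inn)
  hence "t (a+b) - t a - t b = 0" by simp
  thus "t (a+b) = t a + t b" by (simp add: algebra_simps)
next
  fix r a
  have "(t (r*\<^sub>R a) - r *\<^sub>R t a) \<bullet> (t (r*\<^sub>R a) - r *\<^sub>R t a) = (r*\<^sub>R a - r *\<^sub>R a) \<bullet> (r*\<^sub>R a - r *\<^sub>R a)"
    by (simp only: inner_diff_left inner_diff_right inner_scaleR_left inner_scaleR_right inn) simp
  hence "t (r*\<^sub>R a) - r *\<^sub>R t a = 0" by simp
  thus "t (r *\<^sub>R a) = r *\<^sub>R t a" by simp
qed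

lemma rot_fixed:
  fixes t u :: "real^3" and \<tau> :: "real^3 \<Rightarrow> real^3"
  assumes inn: "\<And>a b. \<tau> a \<bullet> \<tau> b = a \<bullet> b"
    and crs: "\<And>a b. \<tau> (cross3 a b) = cross3 (\<tau> a) (\<tau> b)"
    and tu: "\<tau> u = - u" and u0: "u \<noteq> 0"
  shows "\<exists>c. c\<bullet>c = 1 \<and> c\<bullet>u = 0 \<and> \<tau> c = c \<and> (\<forall>x. x\<bullet>c = 0 \<longrightarrow> \<tau> x = - x)"
proof -
  have lin: "linear \<tau>" by (rule inner_pres_linear) (rule inn)
  define a where "a = u /\<^sub>R norm u"
  have aa: "a\<bullet>a = 1" using u0 by (simp add: a_def dot_square_norm power2_eq_square)
  have ta: "\<tau> a = - a" using tu by (simp add: a_def linear_cmul[OF lin])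
  obtain b where b: "b\<bullet>b = 1" "b\<bullet>u = 0" using exists_orth_unit[OF u0] by blast
  have ab: "a\<bullet>b = 0" using b by (simp add: a_def inner_commute)
  define w where "w = cross3 a b"
  have ww: "w\<bullet>w = 1" using aa b ab by (simp add: w_def norm_cross_sq)
  have aw: "a\<bullet>w = 0" "b\<bullet>w = 0" by (simp_all add: w_def dot_cross_self inner_commute)
  define p where "p = \<tau> b"
  have pa: "p\<bullet>a = 0" using inn[of b a] ta ab by (simp add: p_def inner_commute)
  have pp: "p\<bullet>p = 1" using inn[of b b] b by (simp add: p_def)
  define \<alpha> where "\<alpha> = p\<bullet>b"
  define \<beta> where "\<beta> = p\<bullet>w"
  have pexp: "p = \<alpha> *\<^sub>R b + \<beta> *\<^sub>R w"
    using frame_expand[OF aa b(1) ww ab aw, of p] pa by (simp add: \<alpha>_def \<beta>_def)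
  have ab1: "\<alpha>^2 + \<beta>^2 = 1"
  proof -
    have "p\<bullet>p = \<alpha>^2 + \<beta>^2"
      by (subst (1 2) pexp) (simp add: inner_add_left inner_add_right b ww aw inner_commute[of w b] power2_eq_square)
    thus ?thesis using pp by simp
  qed
  have axb: "cross3 a w = - b" using aa ab by (simp add: w_def cross_triple)
  have axa: "cross3 a a = 0" by simp
  have tw: "\<tau> w = \<beta> *\<^sub>R b - \<alpha> *\<^sub>R w"
  proof -
    have "\<tau> w = cross3 (- a) p" by (simp add: w_def crs ta p_def)
    also have "\<dots> = - (\<alpha> *\<^sub>R cross3 a b + \<beta> *\<^sub>R cross3 a w)"
      by (simp add: pexp cross_add_right cross_mult_right)
    also have "\<dots> = \<beta> *\<^sub>R b - \<alpha> *\<^sub>R w" by (simp add: axb w_def[symmetric] algebra_simps)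
    finally show ?thesis .
  qed
  have tx: "\<tau> x = - (x\<bullet>a) *\<^sub>R a + ((x\<bullet>b)*\<alpha> + (x\<bullet>w)*\<beta>) *\<^sub>R b + ((x\<bullet>b)*\<beta> - (x\<bullet>w)*\<alpha>) *\<^sub>R w" for x
  proof -
    have "\<tau> x = \<tau> ((x\<bullet>a) *\<^sub>R a + (x\<bullet>b) *\<^sub>R b + (x\<bullet>w) *\<^sub>R w)"
      using frame_expand[OF aa b(1) ww ab aw, of x] by simp
    also have "\<dots> = (x\<bullet>a) *\<^sub>R \<tau> a + (x\<bullet>b) *\<^sub>R p + (x\<bullet>w) *\<^sub>R \<tau> w"
      by (simp add: linear_add[OF lin] linear_cmul[OF lin] p_def)
    also have "\<dots> = - (x\<bullet>a) *\<^sub>R a + ((x\<bullet>b)*\<alpha> + (x\<bullet>w)*\<beta>) *\<^sub>R b + ((x\<bullet>b)*\<beta> - (x\<bullet>w)*\<alpha>) *\<^sub>R w"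
      by (simp add: ta tw pexp algebra_simps)
    finally show ?thesis .
  qed
  have main: "\<exists>f. f \<noteq> 0 \<and> f\<bullet>a = 0 \<and> \<tau> f = f \<and> (\<forall>x. x\<bullet>f = 0 \<longrightarrow> \<tau> x = - x)"
  proof (cases "\<alpha> = -1")
    case True
    hence be: "\<beta> = 0" using ab1 by (simp add: power2_eq_square)
    show ?thesis
    proof (intro exI conjI allI impI)
      show "w \<noteq> 0" using ww by auto
      show "w\<bullet>a = 0" using aw by (simp add: inner_commute)
      show "\<tau> w = w" using tw True be by simp
      fix x assume x: "x\<bullet>w = 0"
      have e: "x = (x\<bullet>a) *\<^sub>R a + (x\<bullet>b) *\<^sub>R b" using frame_expand[OF aa b(1) ww ab aw, of x] x by simp
      have "\<tau> x = - ((x\<bullet>a) *\<^sub>R a + (x\<bullet>b) *\<^sub>R b)" using tx[of x] True be x by (simp add: algebra_simps)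
      thus "\<tau> x = - x" using e by metis
    qed
  next
    case False
    define f where "f = (1+\<alpha>) *\<^sub>R b + \<beta> *\<^sub>R w"
    have fb: "f\<bullet>b = 1 + \<alpha>" "f\<bullet>w = \<beta>" "f\<bullet>a = 0"
      by (simp_all add: f_def inner_add_left b ww aw inner_commute[of w b] inner_commute[of b a] inner_commute[of w a] ab)
    show ?thesis
    proof (intro exI conjI allI impI)
      show "f \<noteq> 0" using fb False by auto
      show "f\<bullet>a = 0" by (rule fb)
      have e1: "(1+\<alpha>)*\<alpha> + \<beta>*\<beta> = 1+\<alpha>" "(1+\<alpha>)*\<beta> - \<beta>*\<alpha> = \<beta>"
        using ab1 by (simp_all add: power2_eq_square algebra_simps)
      show "\<tau> f = f" using tx[of f] fb e1 by (simp add: f_def)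
      fix x assume x: "x\<bullet>f = 0"
      have x1: "(x\<bullet>b)*(1+\<alpha>) + (x\<bullet>w)*\<beta> = 0"
        using x by (simp add: f_def inner_add_right algebra_simps)
      have x2: "(x\<bullet>b)*\<beta> - (x\<bullet>w)*\<alpha> = - (x\<bullet>w)"
      proof -
        have "(1+\<alpha>) * ((x\<bullet>b)*\<beta> - (x\<bullet>w)*\<alpha> + (x\<bullet>w)) = 0"
        proof -
          have "(1+\<alpha>) * ((x\<bullet>b)*\<beta> - (x\<bullet>w)*\<alpha> + (x\<bullet>w)) = \<beta>*((x\<bullet>b)*(1+\<alpha>)) + (x\<bullet>w)*(1 - \<alpha>^2)"
            by (simp add: algebra_simps power2_eq_square)
          also have "\<dots> = \<beta>*(-((x\<bullet>w)*\<beta>)) + (x\<bullet>w)*(1 - \<alpha>^2)"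
          proof -
            have "(x\<bullet>b)*(1+\<alpha>) = -((x\<bullet>w)*\<beta>)" using x1 by linarith
            thus ?thesis by simp
          qed
          also have "\<dots> = (x\<bullet>w)*(1 - (\<alpha>^2 + \<beta>^2))" by (simp add: algebra_simps power2_eq_square)
          finally show ?thesis using ab1 by simp
        qed
        moreover have "1 + \<alpha> \<noteq> 0" using False by simp
        ultimately show ?thesis by simp
      qed
      have x3: "(x\<bullet>b)*\<alpha> + (x\<bullet>w)*\<beta> = - (x\<bullet>b)" using x1 by (simp add: algebra_simps)
      have e: "x = (x\<bullet>a) *\<^sub>R a + (x\<bullet>b) *\<^sub>R b + (x\<bullet>w) *\<^sub>R w" using frame_expand[OF aa b(1) ww ab aw, of x] by simp
      have "\<tau> x = - ((x\<bullet>a) *\<^sub>R a + (x\<bullet>b) *\<^sub>R b + (x\<bullet>w) *\<^sub>R w)"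
        using tx[of x] unfolding x2 x3 by (simp add: algebra_simps)
      thus "\<tau> x = - x" using e by metis
    qed
  qed
  then obtain f where f: "f \<noteq> 0" "f\<bullet>a = 0" "\<tau> f = f" "\<forall>x. x\<bullet>f = 0 \<longrightarrow> \<tau> x = - x" by blast
  show ?thesis
  proof (intro exI conjI allI impI)
    show "(f /\<^sub>R norm f) \<bullet> (f /\<^sub>R norm f) = 1" using f by (simp add: dot_square_norm power2_eq_square)
    show "(f /\<^sub>R norm f) \<bullet> u = 0" using f(2) u0 by (simp add: a_def)
    show "\<tau> (f /\<^sub>R norm f) = f /\<^sub>R norm f" using f(3) by (simp add: linear_cmul[OF lin])
    fix x assume "x \<bullet> (f /\<^sub>R norm f) = 0"
    hence "x\<bullet>f = 0" using f(1) by simp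
    thus "\<tau> x = - x" using f(4) by blast
  qed
qed


lemma stepA_alg:
  fixes g :: "real^3 \<Rightarrow> real^3 \<Rightarrow> real"
  assumes lin: "\<And>x y z r s. g x (r *\<^sub>R y + s *\<^sub>R z) = r * g x y + s * g x z"
    and sym: "\<And>x y. g x y = g y x"
    and H: "\<And>u. u \<noteq> 0 \<Longrightarrow> \<exists>c. c\<bullet>c = 1 \<and> c\<bullet>u = 0 \<and> (\<forall>x. x\<bullet>c = 0 \<longrightarrow> g c x = 0)"
  shows "\<exists>c1 c2 c3. c1\<bullet>c1 = 1 \<and> c2\<bullet>c2 = 1 \<and> c3\<bullet>c3 = 1 \<and> c1\<bullet>c2 = 0 \<and> c1\<bullet>c3 = 0 \<and> c2\<bullet>c3 = 0
     \<and> g c1 c2 = 0 \<and> g c1 c3 = 0 \<and> g c2 c3 = 0 \<and> g c2 c2 = g c3 c3"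
proof -
  have lin3: "g x (r *\<^sub>R y + s *\<^sub>R z + t *\<^sub>R w) = r * g x y + s * g x z + t * g x w" for x y z w r s t
  proof -
    have "g x (r *\<^sub>R y + s *\<^sub>R z + t *\<^sub>R w) = g x (1 *\<^sub>R (r *\<^sub>R y + s *\<^sub>R z) + t *\<^sub>R w)" by simp
    also have "\<dots> = g x (r *\<^sub>R y + s *\<^sub>R z) + t * g x w" by (simp only: lin) simp
    finally show ?thesis by (simp add: lin)
  qed
  have "(axis 1 1 :: real^3) \<noteq> 0" by (simp add: axis_eq_0_iff)
  from H[OF this] obtain c1 where c1: "c1\<bullet>c1 = 1" "\<forall>x. x\<bullet>c1 = 0 \<longrightarrow> g c1 x = 0" by blast
  have "c1 \<noteq> 0" using c1 by auto
  from H[OF this] obtain c2 where c2: "c2\<bullet>c2 = 1" "c2\<bullet>c1 = 0" "\<forall>x. x\<bullet>c2 = 0 \<longrightarrow> g c2 x = 0" by blast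
  define c3 where "c3 = cross3 c1 c2"
  have c3: "c3\<bullet>c3 = 1" "c1\<bullet>c3 = 0" "c2\<bullet>c3 = 0" "c1\<bullet>c2 = 0"
    using c1 c2 by (simp_all add: c3_def norm_cross_sq dot_cross_self inner_commute)
  have g12: "g c1 c2 = 0" using c1 c2 by (simp add: inner_commute)
  have g13: "g c1 c3 = 0" using c1 c3 by (simp add: inner_commute)
  have g23: "g c2 c3 = 0" using c2 c3 by (simp add: inner_commute)
  show ?thesis
  proof (cases "g c2 c2 = g c3 c3")
    case True thus ?thesis using c1 c2 c3 g12 g13 g23 by blast
  next
    case n23: False
    show ?thesis
    proof (cases "g c1 c1 = g c2 c2")
      case True
      show ?thesis
        apply (rule exI[of _ c3], rule exI[of _ c1], rule exI[of _ c2])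
        using c1 c2 c3 g12 g13 g23 True by (simp add: inner_commute sym)
    next
      case n12: False
      show ?thesis
      proof (cases "g c1 c1 = g c3 c3")
        case True
        show ?thesis
          apply (rule exI[of _ c2], rule exI[of _ c1], rule exI[of _ c3])
          using c1 c2 c3 g12 g13 g23 True by (simp add: inner_commute sym)
      next
        case n13: False
        define u where "u = c1 + c2 + c3"
        have "u\<bullet>u = 3" using c1 c2 c3
          by (simp add: u_def inner_add_left inner_add_right inner_commute)
        hence "u \<noteq> 0" by auto
        from H[OF this] obtain c where c: "c\<bullet>c = 1" "c\<bullet>u = 0" "\<forall>x. x\<bullet>c = 0 \<longrightarrow> g c x = 0" by blast
        define \<gamma>1 where "\<gamma>1 = c\<bullet>c1"
        define \<gamma>2 where "\<gamma>2 = c\<bullet>c2"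
        define \<gamma>3 where "\<gamma>3 = c\<bullet>c3"
        have cexp: "c = \<gamma>1 *\<^sub>R c1 + \<gamma>2 *\<^sub>R c2 + \<gamma>3 *\<^sub>R c3"
          using frame_expand[OF c1(1) c2(1) c3(1) c3(4) c3(2) c3(3), of c] by (simp add: \<gamma>1_def \<gamma>2_def \<gamma>3_def)
        have gx: "g x c = \<gamma>1 * g x c1 + \<gamma>2 * g x c2 + \<gamma>3 * g x c3" for x
          by (subst cexp, rule lin3)
        have gc: "g c c1 = \<gamma>1 * g c1 c1" "g c c2 = \<gamma>2 * g c2 c2" "g c c3 = \<gamma>3 * g c3 c3"
          using gx[of c1] gx[of c2] gx[of c3] g12 g13 g23 sym[of c] sym[of c2 c1] sym[of c3 c1] sym[of c3 c2] by simp_all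
        have key: "\<gamma>i * \<gamma>j * (g ci ci - g cj cj) = 0"
          if "ci\<bullet>ci = 1" "cj\<bullet>cj = 1" "ci\<bullet>cj = 0" "\<gamma>i = c\<bullet>ci" "\<gamma>j = c\<bullet>cj" "g c ci = \<gamma>i * g ci ci" "g c cj = \<gamma>j * g cj cj"
          for ci cj \<gamma>i \<gamma>j
        proof -
          have "(\<gamma>j *\<^sub>R ci + (-\<gamma>i) *\<^sub>R cj) \<bullet> c = 0" using that by (simp add: inner_add_left inner_diff_right inner_commute)
          hence "g c (\<gamma>j *\<^sub>R ci + (-\<gamma>i) *\<^sub>R cj) = 0" using c(3) by blast
          hence "\<gamma>j * g c ci - \<gamma>i * g c cj = 0" by (simp only: lin)
          thus ?thesis using that by (simp add: algebra_simps)
        qed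
        have p12: "\<gamma>1 * \<gamma>2 = 0" using key[OF c1(1) c2(1) c3(4) \<gamma>1_def \<gamma>2_def gc(1) gc(2)] n12 by simp
        have p13: "\<gamma>1 * \<gamma>3 = 0" using key[OF c1(1) c3(1) c3(2) \<gamma>1_def \<gamma>3_def gc(1) gc(3)] n13 by simp
        have p23: "\<gamma>2 * \<gamma>3 = 0" using key[OF c2(1) c3(1) c3(3) \<gamma>2_def \<gamma>3_def gc(2) gc(3)] n23 by simp
        have s0: "\<gamma>1 + \<gamma>2 + \<gamma>3 = 0" using c(2) by (simp add: u_def \<gamma>1_def \<gamma>2_def \<gamma>3_def inner_add_right)
        have s1: "\<gamma>1^2 + \<gamma>2^2 + \<gamma>3^2 = 1"
        proof -
          have "c\<bullet>c = \<gamma>1^2 + \<gamma>2^2 + \<gamma>3^2"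
            by (subst (1) cexp) (simp add: inner_add_left inner_add_right \<gamma>1_def \<gamma>2_def \<gamma>3_def power2_eq_square inner_commute)
          thus ?thesis using c(1) by simp
        qed
        have "(\<gamma>1 + \<gamma>2 + \<gamma>3)^2 = \<gamma>1^2 + \<gamma>2^2 + \<gamma>3^2 + 2*(\<gamma>1*\<gamma>2) + 2*(\<gamma>1*\<gamma>3) + 2*(\<gamma>2*\<gamma>3)"
          by (simp add: power2_eq_square algebra_simps)
        hence False using s0 s1 p12 p13 p23 by simp
        thus ?thesis ..
      qed
    qed
  qed
qed


lemma g_frame_expand:
  fixes g :: "real^3 \<Rightarrow> real^3 \<Rightarrow> real"
  assumes lin: "\<And>x y z r s. g x (r *\<^sub>R y + s *\<^sub>R z) = r * g x y + s * g x z"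
    and sym: "\<And>x y. g x y = g y x"
    and fr: "c1\<bullet>c1 = 1" "c2\<bullet>c2 = 1" "c3\<bullet>c3 = 1" "c1\<bullet>c2 = 0" "c1\<bullet>c3 = 0" "c2\<bullet>c3 = 0"
    and gd: "g c1 c2 = 0" "g c1 c3 = 0" "g c2 c3 = 0"
  shows "g v w = g c1 c1 * (v\<bullet>c1) * (w\<bullet>c1) + g c2 c2 * (v\<bullet>c2) * (w\<bullet>c2) + g c3 c3 * (v\<bullet>c3) * (w\<bullet>c3)"
proof -
  have lin3: "g x (r *\<^sub>R y + s *\<^sub>R z + t *\<^sub>R u) = r * g x y + s * g x z + t * g x u" for x y z u r s t
  proof -
    have "g x (r *\<^sub>R y + s *\<^sub>R z + t *\<^sub>R u) = g x (1 *\<^sub>R (r *\<^sub>R y + s *\<^sub>R z) + t *\<^sub>R u)" by simp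
    also have "\<dots> = g x (r *\<^sub>R y + s *\<^sub>R z) + t * g x u" by (simp only: lin) simp
    finally show ?thesis by (simp add: lin)
  qed
  have ex: "x = (x\<bullet>c1) *\<^sub>R c1 + (x\<bullet>c2) *\<^sub>R c2 + (x\<bullet>c3) *\<^sub>R c3" for x
    by (rule frame_expand[OF fr])
  have gw: "g x w = (w\<bullet>c1) * g x c1 + (w\<bullet>c2) * g x c2 + (w\<bullet>c3) * g x c3" for x
    by (subst ex[of w]) (rule lin3)
  have gv: "g v x = (v\<bullet>c1) * g c1 x + (v\<bullet>c2) * g c2 x + (v\<bullet>c3) * g c3 x" for x
    by (subst sym, subst ex[of v], subst lin3) (simp add: sym)
  show ?thesis
    unfolding gv gw using gd sym[of c2 c1] sym[of c3 c1] sym[of c3 c2] by (simp add: algebra_simps)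
qed

lemma tau_is_refl:
  fixes \<tau> :: "real^3 \<Rightarrow> real^3" and g :: "real^3 \<Rightarrow> real^3 \<Rightarrow> real"
  assumes inn: "\<And>a b. \<tau> a \<bullet> \<tau> b = a \<bullet> b"
    and crs: "\<And>a b. \<tau> (cross3 a b) = cross3 (\<tau> a) (\<tau> b)"
    and lin: "\<And>x y z r s. g x (r *\<^sub>R y + s *\<^sub>R z) = r * g x y + s * g x z"
    and sym: "\<And>x y. g x y = g y x"
    and fr: "c1\<bullet>c1 = 1" "c2\<bullet>c2 = 1" "c3\<bullet>c3 = 1" "c1\<bullet>c2 = 0" "c1\<bullet>c3 = 0" "c2\<bullet>c3 = 0"
    and gd: "g c1 c2 = 0" "g c1 c3 = 0" "g c2 c3 = 0" "g c2 c2 = g c3 c3"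
    and gne: "g c1 c1 \<noteq> g c2 c2"
    and gpres: "\<And>a b. g (\<tau> a) (\<tau> b) = g a b"
    and c: "c\<bullet>c = 1" "c\<bullet>c1 = 0"
    and tu: "\<tau> (c1 + cross3 c c1) = - (c1 + cross3 c c1)"
  shows "\<tau> y = (2 * (y\<bullet>c)) *\<^sub>R c - y"
proof -
  have tl: "linear \<tau>" by (rule inner_pres_linear) (rule inn)
  have ge: "g v w = (g c1 c1 - g c2 c2) * ((v\<bullet>c1) * (w\<bullet>c1)) + g c2 c2 * (v\<bullet>w)" for v w
  proof -
    have "v\<bullet>w = (v\<bullet>c1)*(w\<bullet>c1) + (v\<bullet>c2)*(w\<bullet>c2) + (v\<bullet>c3)*(w\<bullet>c3)"
      by (subst (1) frame_expand[OF fr, of v]) (simp add: inner_add_left inner_add_right inner_commute)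
    thus ?thesis using g_frame_expand[OF lin sym fr gd(1-3), of v w] gd(4) by (simp add: algebra_simps)
  qed
  have h: "(\<tau> v\<bullet>c1) * (\<tau> w\<bullet>c1) = (v\<bullet>c1) * (w\<bullet>c1)" for v w
  proof -
    have "(g c1 c1 - g c2 c2) * ((\<tau> v\<bullet>c1) * (\<tau> w\<bullet>c1)) = (g c1 c1 - g c2 c2) * ((v\<bullet>c1) * (w\<bullet>c1))"
      using gpres[of v w] ge[of "\<tau> v" "\<tau> w"] ge[of v w] inn[of v w] by simp
    thus ?thesis using gne by simp
  qed
  define y0 where "y0 = \<tau> c1"
  have yy: "y0\<bullet>y0 = 1" using inn[of c1 c1] fr by (simp add: y0_def)
  have yc: "(y0\<bullet>c1)^2 = 1" using h[of c1 c1] fr by (simp add: y0_def power2_eq_square)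
  have ypm: "y0 = (y0\<bullet>c1) *\<^sub>R c1"
  proof -
    have "(y0 - (y0\<bullet>c1) *\<^sub>R c1) \<bullet> (y0 - (y0\<bullet>c1) *\<^sub>R c1) = y0\<bullet>y0 - 2*(y0\<bullet>c1)^2 + (y0\<bullet>c1)^2 * (c1\<bullet>c1)"
      by (simp add: inner_diff_left inner_diff_right inner_commute power2_eq_square algebra_simps)
    also have "\<dots> = 0" using yy yc fr by simp
    finally show ?thesis by simp
  qed
  define e where "e = cross3 c c1"
  have ee: "e\<bullet>e = 1" "e\<bullet>c1 = 0" "e\<bullet>c = 0" "c1\<bullet>e = 0" "c\<bullet>e = 0" "c1\<bullet>c = 0"
    using c fr by (simp_all add: e_def norm_cross_sq dot_cross_self inner_commute)
  have sum: "\<tau> c1 + \<tau> e = - c1 - e" using tu by (simp add: linear_add[OF tl] e_def)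
  have tec: "\<tau> e \<bullet> c1 = 0"
  proof -
    have "\<tau> e \<bullet> \<tau> c1 = 0" using inn[of e c1] ee by simp
    hence "(y0\<bullet>c1) * (\<tau> e \<bullet> c1) = 0" by (subst (asm) y0_def[symmetric], subst (asm) ypm) simp
    thus ?thesis using yc by auto
  qed
  have "(\<tau> c1 + \<tau> e) \<bullet> c1 = (- c1 - e) \<bullet> c1" using sum by simp
  hence "y0\<bullet>c1 = -1" using tec fr ee by (simp add: inner_add_left inner_diff_left y0_def)
  hence tc1: "\<tau> c1 = - c1" using ypm by (simp add: y0_def)
  have te: "\<tau> e = - e" using sum tc1 by simp
  have ce: "cross3 c1 e = c" using fr c by (simp add: e_def cross_triple inner_commute)
  have tc: "\<tau> c = c" using crs[of c1 e] tc1 te ce by simp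
  have ex: "y' = (y'\<bullet>c1) *\<^sub>R c1 + (y'\<bullet>e) *\<^sub>R e + (y'\<bullet>c) *\<^sub>R c" for y'
    by (rule frame_expand) (use fr ee c in auto)
  have "\<tau> y = (y\<bullet>c1) *\<^sub>R \<tau> c1 + (y\<bullet>e) *\<^sub>R \<tau> e + (y\<bullet>c) *\<^sub>R \<tau> c"
    by (subst ex[of y]) (simp add: linear_add[OF tl] linear_cmul[OF tl])
  also have "\<dots> = (2 * (y\<bullet>c)) *\<^sub>R c - ((y\<bullet>c1) *\<^sub>R c1 + (y\<bullet>e) *\<^sub>R e + (y\<bullet>c) *\<^sub>R c)"
    by (simp add: tc1 te tc vec_eq_iff algebra_simps)
  also have "\<dots> = (2 * (y\<bullet>c)) *\<^sub>R c - y" using ex[of y] by metis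
  finally show ?thesis .
qed


lemma vector4 [simp]:
  "(vector [a,b,c,d] :: ('x::zero)^4) $ 1 = a"
  "(vector [a,b,c,d] :: ('x::zero)^4) $ 2 = b"
  "(vector [a,b,c,d] :: ('x::zero)^4) $ 3 = c"
  "(vector [a,b,c,d] :: ('x::zero)^4) $ 4 = d"
  by (simp_all add: vector_def)

definition qone :: "real^4" where "qone = vector [1,0,0,0]"
definition qconj :: "real^4 \<Rightarrow> real^4" where "qconj x = vector [x$1, -x$2, -x$3, -x$4]"
definition em :: "real^3 \<Rightarrow> real^4" where "em v = vector [0, v$1, v$2, v$3]"
definition im :: "real^4 \<Rightarrow> real^3" where "im x = vector [x$2, x$3, x$4]"

lemma qmult_comp:
  "qmult x y $ 1 = x$1*y$1 - x$2*y$2 - x$3*y$3 - x$4*y$4"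
  "qmult x y $ 2 = x$1*y$2 + x$2*y$1 + x$3*y$4 - x$4*y$3"
  "qmult x y $ 3 = x$1*y$3 - x$2*y$4 + x$3*y$1 + x$4*y$2"
  "qmult x y $ 4 = x$1*y$4 + x$2*y$3 - x$3*y$2 + x$4*y$1"
  by (simp_all add: qmult_def)

lemma comp_simps [simp]:
  "qone$1 = 1" "qone$2 = 0" "qone$3 = 0" "qone$4 = 0"
  "qconj x $1 = x$1" "qconj x $2 = - x$2" "qconj x $3 = - x$3" "qconj x $4 = - x$4"
  "em v $1 = 0" "em v $2 = v$1" "em v $3 = v$2" "em v $4 = v$3"
  "im x $1 = x$2" "im x $2 = x$3" "im x $3 = x$4"
  by (simp_all add: qone_def qconj_def em_def im_def)

lemma inner4: "(x::real^4) \<bullet> y = x$1*y$1 + x$2*y$2 + x$3*y$3 + x$4*y$4"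
  by (simp add: inner_vec_def sum_4)
lemma inner3: "(x::real^3) \<bullet> y = x$1*y$1 + x$2*y$2 + x$3*y$3"
  by (simp add: inner_vec_def sum_3)

lemma q4eq: "(x::real^4) = y \<longleftrightarrow> x$1 = y$1 \<and> x$2 = y$2 \<and> x$3 = y$3 \<and> x$4 = y$4"
  by (simp add: vec_eq_iff forall_4)
lemma q3eq: "(x::real^3) = y \<longleftrightarrow> x$1 = y$1 \<and> x$2 = y$2 \<and> x$3 = y$3"
  by (simp add: vec_eq_iff forall_3)

lemma qmult_add_right: "qmult a (x + y) = qmult a x + qmult a y"
  by (simp add: q4eq qmult_comp algebra_simps)
lemma qmult_add_left: "qmult (x + y) a = qmult x a + qmult y a"
  by (simp add: q4eq qmult_comp algebra_simps)
lemma qmult_scaleR_right: "qmult a (r *\<^sub>R x) = r *\<^sub>R qmult a x"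
  by (simp add: q4eq qmult_comp algebra_simps)
lemma qmult_scaleR_left: "qmult (r *\<^sub>R x) a = r *\<^sub>R qmult x a"
  by (simp add: q4eq qmult_comp algebra_simps)
lemma qmult_assoc: "qmult (qmult a b) c = qmult a (qmult b c)"
  by (simp add: q4eq qmult_comp algebra_simps)
lemma qmult_one_right [simp]: "qmult x qone = x"
  by (simp add: q4eq qmult_comp)
lemma qmult_one_left [simp]: "qmult qone x = x"
  by (simp add: q4eq qmult_comp)
lemma linear_qmult_right: "linear (qmult a)"
  by (rule linearI) (simp_all add: qmult_add_right qmult_scaleR_right)
lemma linear_qmult_left: "linear (\<lambda>x. qmult x a)"
  by (rule linearI) (simp_all add: qmult_add_left qmult_scaleR_left)
lemma qmult_zero_right [simp]: "qmult a 0 = 0" by (simp add: q4eq qmult_comp)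
lemma qmult_zero_left [simp]: "qmult 0 a = 0" by (simp add: q4eq qmult_comp)
lemma qmult_neg_right: "qmult a (- x) = - qmult a x" by (simp add: q4eq qmult_comp)
lemma qmult_neg_left: "qmult (- x) a = - qmult x a" by (simp add: q4eq qmult_comp)

lemma qmult_em_em: "qmult (em a) (em b) = (- (a\<bullet>b)) *\<^sub>R qone + em (cross3 a b)"
  by (simp add: q4eq qmult_comp inner3 cross3_def algebra_simps)
lemma qmult_em_em_x: "qmult (em a) (qmult (em a) x) = (- (a\<bullet>a)) *\<^sub>R x"
  by (simp add: q4eq qmult_comp inner3 algebra_simps)

lemma em_add: "em (a + b) = em a + em b" by (simp add: q4eq)
lemma em_scaleR: "em (r *\<^sub>R a) = r *\<^sub>R em a" by (simp add: q4eq)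
lemma em_neg: "em (- a) = - em a" by (simp add: q4eq)
lemma em_zero [simp]: "em 0 = 0" by (simp add: q4eq)
lemma linear_em: "linear em" by (rule linearI) (simp_all add: em_add em_scaleR)
lemma linear_im: "linear im" by (rule linearI) (simp_all add: q3eq)
lemma im_em [simp]: "im (em v) = v" by (simp add: q3eq)
lemma em_im: "x \<in> ImH \<Longrightarrow> em (im x) = x" by (simp add: q4eq ImH_def)
lemma em_ImH: "em v \<in> ImH" by (simp add: ImH_def)
lemma em_inj: "em a = em b \<Longrightarrow> a = b" by (metis im_em)
lemma inner_em: "em a \<bullet> em b = a \<bullet> b" by (simp add: inner4 inner3)
lemma inner_qone_em: "qone \<bullet> em a = 0" by (simp add: inner4)

lemma norm_qmult_sq: "qmult a x \<bullet> qmult a x = (a\<bullet>a) * (x\<bullet>x)"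
  by (simp add: inner4 qmult_comp algebra_simps power2_eq_square)

lemma qmult_conj_self: "qmult (qconj u) u = (u\<bullet>u) *\<^sub>R qone"
  by (simp add: q4eq qmult_comp inner4 algebra_simps)
lemma qmult_self_conj: "qmult u (qconj u) = (u\<bullet>u) *\<^sub>R qone"
  by (simp add: q4eq qmult_comp inner4 algebra_simps)

definition qrot :: "real^4 \<Rightarrow> real^3 \<Rightarrow> real^3" where
  "qrot u a = im (qmult (qmult u (em a)) (qconj u))"

lemma qrot_ImH: "(qmult (qmult u (em a)) (qconj u)) $ 1 = 0"
  by (simp add: qmult_comp algebra_simps)

lemma qrot_em: "em (qrot u a) = qmult (qmult u (em a)) (qconj u)"
  unfolding qrot_def by (rule em_im) (simp add: ImH_def qrot_ImH)

lemma qrot_intertwine: "u\<bullet>u = 1 \<Longrightarrow> qmult u (em a) = qmult (em (qrot u a)) u"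
  by (simp add: qrot_em qmult_assoc qmult_conj_self)

lemma qrot_inner: "u\<bullet>u = 1 \<Longrightarrow> qrot u a \<bullet> qrot u b = a \<bullet> b"
proof -
  assume u: "u\<bullet>u = 1"
  have "qrot u a \<bullet> qrot u b = em (qrot u a) \<bullet> em (qrot u b)" by (simp add: inner_em)
  also have "\<dots> = a\<bullet>b"
    unfolding qrot_em using u by (simp add: inner4 inner3 qmult_comp) algebra
  finally show ?thesis .
qed


lemma intertwine_qrot:
  assumes "u\<bullet>u = 1" "qmult u (em a) = qmult (em b) u"
  shows "qrot u a = b"
proof -
  have "em (qrot u a) = qmult (qmult (em b) u) (qconj u)" by (simp add: qrot_em assms(2))
  also have "\<dots> = em b" using assms(1) by (simp add: qmult_assoc qmult_self_conj qmult_scaleR_right)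
  finally show ?thesis by (rule em_inj)
qed

lemma em_commute: "cross3 x c = 0 \<Longrightarrow> qmult (em x) (em c) = qmult (em c) (em x)"
  using cross_skew[of c x] by (simp add: qmult_em_em inner_commute)

lemma rot_gen:
  fixes a b c :: "real^3"
  assumes a: "a\<bullet>a = 1" and b: "b\<bullet>b = 1" and ca: "c\<bullet>a = 0" and cb: "c\<bullet>b = 0"
  shows "\<exists>u. u\<bullet>u = 1 \<and> qmult u (em a) = qmult (em b) u \<and> qmult u (em c) = qmult (em c) u"
proof (cases "b = - a")
  case True
  obtain p where p: "p\<bullet>p = 1" "p\<bullet>a = 0" "cross3 p c = 0"
  proof (cases "c = 0")
    case True
    have "a \<noteq> 0" using a by auto
    from exists_orth_unit[OF this] obtain p where "p\<bullet>p = 1" "p\<bullet>a = 0" by blast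
    thus ?thesis using that True by simp
  next
    case False
    show ?thesis
      apply (rule that[of "c /\<^sub>R norm c"])
      using False ca proof -
        have n1: "norm (c /\<^sub>R norm c) = 1" using False by simp
        show "(c /\<^sub>R norm c) \<bullet> (c /\<^sub>R norm c) = 1" by (simp only: dot_square_norm n1) simp
        show "(c /\<^sub>R norm c) \<bullet> a = 0" using ca by simp
        show "cross3 (c /\<^sub>R norm c) c = 0" by (simp add: cross_mult_left)
      qed
  qed
  show ?thesis
  proof (intro exI conjI)
    show "em p \<bullet> em p = 1" using p by (simp add: inner_em)
    show "qmult (em p) (em a) = qmult (em b) (em p)"
    proof -
      have "qmult (em p) (em a) = em (cross3 p a)" using p by (simp add: qmult_em_em)
      moreover have "qmult (em b) (em p) = em (cross3 p a)"
        using p True by (simp add: qmult_em_em inner_commute cross_skew[of a p])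
      ultimately show ?thesis by simp
    qed
    show "qmult (em p) (em c) = qmult (em c) (em p)" by (rule em_commute) (rule p(3))
  qed
next
  case False
  define w where "w = qone - qmult (em b) (em a)"
  have w_eq: "w = (1 + a\<bullet>b) *\<^sub>R qone - em (cross3 b a)"
    by (simp add: w_def qmult_em_em inner_commute algebra_simps)
  have w0: "w \<noteq> 0"
  proof
    assume "w = 0"
    hence "w $ 1 = 0" by simp
    hence "a\<bullet>b = -1" by (simp add: w_eq)
    hence "(a+b)\<bullet>(a+b) = 0" using a b by (simp add: inner_add_left inner_add_right inner_commute)
    hence "a + b = 0" by simp
    hence "b = - a" by (simp add: add_eq_0_iff2)
    with False show False ..
  qed
  define u where "u = w /\<^sub>R norm w"
  have qd: "qmult x (y - z) = qmult x y - qmult x z" "qmult (y - z) x = qmult y x - qmult z x" for x y z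
    by (simp_all add: q4eq qmult_comp algebra_simps)
  have aa': "qmult (em a) (em a) = - qone" using a by (simp add: qmult_em_em)
  have bb': "qmult (em b) (em b) = - qone" using b by (simp add: qmult_em_em)
  have wa: "qmult w (em a) = qmult (em b) w"
  proof -
    have "qmult w (em a) = em a - qmult (em b) (qmult (em a) (em a))"
      unfolding w_def qd qmult_one_left qmult_assoc ..
    also have "\<dots> = em a + em b" by (simp add: aa' qmult_neg_right)
    also have "\<dots> = em b - qmult (qmult (em b) (em b)) (em a)" by (simp add: bb' qmult_neg_left)
    also have "\<dots> = qmult (em b) w"
      unfolding w_def qd qmult_one_right qmult_assoc ..
    finally show ?thesis .
  qed
  have wc: "qmult w (em c) = qmult (em c) w"
  proof -
    have x: "cross3 (cross3 b a) c = 0"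
      using ca cb by (simp add: cross_skew[of "cross3 b a"] cross_triple inner_commute)
    have "qmult (em (cross3 b a)) (em c) = qmult (em c) (em (cross3 b a))" by (rule em_commute[OF x])
    thus ?thesis unfolding w_eq qd qmult_scaleR_left qmult_scaleR_right qmult_one_left qmult_one_right by simp
  qed
  show ?thesis
  proof (intro exI conjI)
    have nw: "norm w \<noteq> 0" using w0 by simp
    have "norm u = 1" using nw by (simp add: u_def)
    thus "u\<bullet>u = 1" by (simp add: dot_square_norm)
    show "qmult u (em a) = qmult (em b) u" unfolding u_def qmult_scaleR_left qmult_scaleR_right wa ..
    show "qmult u (em c) = qmult (em c) u" unfolding u_def qmult_scaleR_left qmult_scaleR_right wc ..
  qed
qed

definition qI :: "real^3" where "qI = axis 1 1"
definition qJ :: "real^3" where "qJ = axis 2 1"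
definition qK :: "real^3" where "qK = axis 3 1"

lemma qIJK: "qI\<bullet>qI = 1" "qJ\<bullet>qJ = 1" "qK\<bullet>qK = 1" "qI\<bullet>qJ = 0" "qI\<bullet>qK = 0" "qJ\<bullet>qK = 0"
  "qJ\<bullet>qI = 0" "qK\<bullet>qI = 0" "qK\<bullet>qJ = 0"
  by (simp_all add: qI_def qJ_def qK_def inner_axis_axis)

lemma rot_frame:
  fixes a2 a3 :: "real^3"
  assumes "a2\<bullet>a2 = 1" "a3\<bullet>a3 = 1" "a2\<bullet>a3 = 0"
  shows "\<exists>u. u\<bullet>u = 1 \<and> qmult u (em a2) = qmult (em qJ) u \<and> qmult u (em a3) = qmult (em qK) u"
proof -
  obtain u1 where u1: "u1\<bullet>u1 = 1" "qmult u1 (em a2) = qmult (em qJ) u1"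
    using rot_gen[OF assms(1) qIJK(2), of 0] by auto
  define a3' where "a3' = qrot u1 a3"
  have q2: "qrot u1 a2 = qJ" by (rule intertwine_qrot[OF u1])
  have a3'1: "a3'\<bullet>a3' = 1" using qrot_inner[OF u1(1), of a3 a3] assms by (simp add: a3'_def)
  have a3'2: "qJ\<bullet>a3' = 0" using qrot_inner[OF u1(1), of a2 a3] assms q2 by (simp add: a3'_def)
  obtain u2 where u2: "u2\<bullet>u2 = 1" "qmult u2 (em a3') = qmult (em qK) u2" "qmult u2 (em qJ) = qmult (em qJ) u2"
    using rot_gen[OF a3'1 qIJK(3) a3'2 qIJK(6)] by auto
  have i3: "qmult u1 (em a3) = qmult (em a3') u1" unfolding a3'_def by (rule qrot_intertwine[OF u1(1)])
  show ?thesis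
  proof (intro exI conjI)
    show "qmult u2 u1 \<bullet> qmult u2 u1 = 1" using u1 u2 by (simp add: norm_qmult_sq)
    show "qmult (qmult u2 u1) (em a2) = qmult (em qJ) (qmult u2 u1)"
      by (simp add: qmult_assoc u1(2)) (simp add: qmult_assoc[symmetric] u2(3))
    show "qmult (qmult u2 u1) (em a3) = qmult (em qK) (qmult u2 u1)"
      by (simp add: qmult_assoc i3) (simp add: qmult_assoc[symmetric] u2(2))
  qed
qed


locale WSsetup =
  fixes A :: "'p::finite \<Rightarrow> 'z::euclidean_space \<Rightarrow> real^4"
    and ip :: "(real^4^'p \<Rightarrow> real^4^'p) \<Rightarrow> (real^4^'p \<Rightarrow> real^4^'p) \<Rightarrow> real"
  assumes A_lin: "\<And>s. linear (A s)"
    and A_inj: "\<And>s. inj (A s)"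
    and A_onto: "\<And>s. range (A s) = ImH"
    and ipV: "inner_product_on {qdiag (\<lambda>s. Lq (A s Z)) | Z. True} ip"
    and ws: "WS_pair {qdiag (\<lambda>s. Lq (A s Z)) | Z. True} ip"
begin

definition JJ where "JJ Z = qdiag (\<lambda>s. Lq (A s Z))"
abbreviation VV where "VV \<equiv> {qdiag (\<lambda>s. Lq (A s Z)) | Z. True}"
lemma VV_eq: "VV = range JJ" by (auto simp: JJ_def)
lemma JJ_in: "JJ Z \<in> VV" by (auto simp: JJ_def)

definition B where "B s Z = im (A s Z)"
lemma A_em: "A s Z = em (B s Z)"
  unfolding B_def by (rule em_im[symmetric]) (use A_onto in blast)
lemma B_lin: "linear (B s)"
proof -
  have "B s = im \<circ> A s" by (auto simp: B_def)
  thus ?thesis using linear_compose[OF A_lin linear_im] by simp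
qed
lemma B_inj: "inj (B s)"
  by (rule injI) (metis A_em A_inj injD)
lemma B_surj: "\<exists>Z. B s Z = v"
proof -
  have "em v \<in> range (A s)" using A_onto em_ImH by blast
  then obtain Z where "A s Z = em v" by auto
  thus ?thesis by (intro exI[of _ Z]) (simp add: B_def)
qed
definition Binv where "Binv s = inv (B s)"
lemma B_Binv [simp]: "B s (Binv s v) = v"
  unfolding Binv_def by (metis B_surj f_inv_into_f rangeI)
lemma Binv_B [simp]: "Binv s (B s Z) = Z"
  unfolding Binv_def by (rule inv_f_f[OF B_inj])
lemma Binv_lin: "linear (Binv s)"
proof (rule linearI)
  fix a b
  have "B s (Binv s (a + b)) = B s (Binv s a + Binv s b)" by (simp add: linear_add[OF B_lin])
  thus "Binv s (a + b) = Binv s a + Binv s b" using B_inj injD by metis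
next
  fix r a
  have "B s (Binv s (r *\<^sub>R a)) = B s (r *\<^sub>R Binv s a)" by (simp add: linear_cmul[OF B_lin])
  thus "Binv s (r *\<^sub>R a) = r *\<^sub>R Binv s a" using B_inj injD by metis
qed

lemma JJ_nth: "JJ Z x $ t = qmult (em (B t Z)) (x $ t)"
  by (simp add: JJ_def qdiag_def Lq_def A_em)

lemma JJ_add: "JJ (Z + W) = (\<lambda>x. JJ Z x + JJ W x)"
  by (rule ext) (simp add: vec_eq_iff JJ_nth linear_add[OF B_lin] em_add qmult_add_left)
lemma JJ_scale: "JJ (r *\<^sub>R Z) = (\<lambda>x. r *\<^sub>R JJ Z x)"
  by (rule ext) (simp add: vec_eq_iff JJ_nth linear_cmul[OF B_lin] em_scaleR qmult_scaleR_left)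
lemma JJ_zero: "JJ 0 = (\<lambda>x. 0)"
  by (rule ext) (simp add: vec_eq_iff JJ_nth linear_0[OF B_lin])
lemma JJ_neg: "JJ (- Z) = (\<lambda>x. - JJ Z x)"
  using JJ_scale[of "-1" Z] by simp
lemma JJ_x_lin: "linear (JJ Z)"
  by (rule linearI) (simp_all add: vec_eq_iff JJ_nth qmult_add_right qmult_scaleR_right)
lemma JJ_x_neg: "JJ Z (- x) = - JJ Z x"
  by (simp add: linear_neg[OF JJ_x_lin])

definition es :: "'p \<Rightarrow> real^4 \<Rightarrow> real^4^'p" where "es s q = (\<chi> t. if t = s then q else 0)"
lemma es_nth: "es s q $ t = (if t = s then q else 0)" by (simp add: es_def)
lemma es_add: "es s (a + b) = es s a + es s b" by (simp add: vec_eq_iff es_nth)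
lemma es_scale: "es s (r *\<^sub>R a) = r *\<^sub>R es s a" by (simp add: vec_eq_iff es_nth)
lemma es_neg: "es s (- a) = - es s a" by (simp add: vec_eq_iff es_nth)
lemma es_diff: "es s (a - b) = es s a - es s b" by (simp add: vec_eq_iff es_nth)
lemma JJ_es: "JJ Z (es s q) = es s (qmult (em (B s Z)) q)"
  by (simp add: vec_eq_iff JJ_nth es_nth)

lemma JJ_inj: assumes "JJ Z = JJ W" shows "Z = W"
proof -
  fix s :: 'p
  have "JJ Z (es s qone) $ s = JJ W (es s qone) $ s" using assms by simp
  hence "em (B s Z) = em (B s W)" by (simp add: JJ_es es_nth)
  hence "B s Z = B s W" by (rule em_inj)
  thus ?thesis using B_inj injD by metis
qed

definition zi where "zi Z W = ip (JJ Z) (JJ W)"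

lemma ip_props:
  "\<And>J K. J \<in> VV \<Longrightarrow> K \<in> VV \<Longrightarrow> ip J K = ip K J"
  "\<And>J K L. J \<in> VV \<Longrightarrow> K \<in> VV \<Longrightarrow> L \<in> VV \<Longrightarrow> ip (\<lambda>x. J x + K x) L = ip J L + ip K L"
  "\<And>J K c. J \<in> VV \<Longrightarrow> K \<in> VV \<Longrightarrow> ip (\<lambda>x. c *\<^sub>R J x) K = c * ip J K"
  "\<And>J. J \<in> VV \<Longrightarrow> J \<noteq> (\<lambda>x. 0) \<Longrightarrow> ip J J > 0"
  using ipV unfolding inner_product_on_def by blast+

lemma zi_sym: "zi Z W = zi W Z" unfolding zi_def by (rule ip_props(1)) (rule JJ_in)+
lemma zi_add_left: "zi (Z + W) Y = zi Z Y + zi W Y"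
  unfolding zi_def JJ_add by (rule ip_props(2)) (rule JJ_in)+
lemma zi_scale_left: "zi (r *\<^sub>R Z) Y = r * zi Z Y"
  unfolding zi_def JJ_scale by (rule ip_props(3)) (rule JJ_in)+
lemma zi_add_right: "zi Y (Z + W) = zi Y Z + zi Y W"
  using zi_add_left zi_sym by metis
lemma zi_scale_right: "zi Y (r *\<^sub>R Z) = r * zi Y Z"
  using zi_scale_left zi_sym by metis
lemma zi_pos: "Z \<noteq> 0 \<Longrightarrow> zi Z Z > 0"
  unfolding zi_def
proof (rule ip_props(4))
  assume "Z \<noteq> 0"
  show "JJ Z \<in> VV" by (rule JJ_in)
  show "JJ Z \<noteq> (\<lambda>x. 0)" using JJ_inj JJ_zero \<open>Z \<noteq> 0\<close> by metis
qed

definition gs where "gs s a b = zi (Binv s a) (Binv s b)"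
lemma gs_lin: "gs s x (r *\<^sub>R y + t *\<^sub>R z) = r * gs s x y + t * gs s x z"
  by (simp add: gs_def linear_add[OF Binv_lin] linear_cmul[OF Binv_lin] zi_add_right zi_scale_right)
lemma gs_sym: "gs s x y = gs s y x" by (simp add: gs_def zi_sym)
lemma gs_neg: "gs s x (- y) = - gs s x y"
  using gs_lin[of s x "-1" y 0 y] by simp

definition sig where "sig N W = (SOME W'. N \<circ> JJ W \<circ> inv N = JJ W')"

lemma NV_basic:
  assumes "N \<in> NV VV ip"
  shows "linear N" "inj N" "surj N" "N \<circ> JJ W \<circ> inv N = JJ (sig N W)"
    "zi (sig N W) (sig N W') = zi W W'"
proof -
  have ot: "orthogonal_transformation N" using assms by (simp add: NV_def)
  show "linear N" using ot by (simp add: orthogonal_transformation_linear)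
  show "inj N" using ot by (simp add: orthogonal_transformation_inj)
  show "surj N" using ot by (simp add: orthogonal_transformation_surj)
  have "N \<circ> JJ W \<circ> inv N \<in> VV" for W using assms JJ_in by (simp add: NV_def)
  hence "\<exists>W'. N \<circ> JJ W \<circ> inv N = JJ W'" for W using VV_eq by auto
  thus c: "N \<circ> JJ W \<circ> inv N = JJ (sig N W)" for W unfolding sig_def by (rule someI_ex)
  have "ip (N \<circ> JJ W \<circ> inv N) (N \<circ> JJ W' \<circ> inv N) = ip (JJ W) (JJ W')"
    using assms JJ_in by (simp add: NV_def)
  thus "zi (sig N W) (sig N W') = zi W W'" by (simp add: zi_def c)
qed

lemma NV_inter:
  assumes "N \<in> NV VV ip" shows "N (JJ W x) = JJ (sig N W) (N x)"
proof -
  have "(N \<circ> JJ W \<circ> inv N) (N x) = JJ (sig N W) (N x)" using NV_basic(4)[OF assms] by simp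
  thus ?thesis using inv_f_f[OF NV_basic(2)[OF assms]] by simp
qed

lemma WS_get:
  "\<exists>N \<in> NV VV ip. N X = - X \<and> sig N Z = - Z"
proof -
  obtain N where N: "N \<in> NV VV ip" "N X = - X" "N \<circ> JJ Z = (\<lambda>x. - JJ Z (N x))"
    using ws JJ_in unfolding WS_pair_def by blast
  have "JJ (sig N Z) = N \<circ> JJ Z \<circ> inv N" using NV_basic(4)[OF N(1)] by simp
  also have "\<dots> = (\<lambda>x. - JJ Z (N (inv N x)))" using N(3) by (simp add: comp_def fun_eq_iff)
  also have "\<dots> = JJ (- Z)" using surj_f_inv_f[OF NV_basic(3)[OF N(1)]] by (simp add: JJ_neg)
  finally have "sig N Z = - Z" by (rule JJ_inj)
  thus ?thesis using N by blast
qed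

end


context WSsetup begin

lemma block_tau:
  assumes N: "N \<in> NV VV ip" and NX: "N (es s qone) = - es s qone"
  shows "\<And>a b. B s (sig N (Binv s a)) \<bullet> B s (sig N (Binv s b)) = a \<bullet> b"
    and "\<And>a b. B s (sig N (Binv s (cross3 a b))) = cross3 (B s (sig N (Binv s a))) (B s (sig N (Binv s b)))"
    and "\<And>a b. gs s (B s (sig N (Binv s a))) (B s (sig N (Binv s b))) = gs s a b"
proof -
  define \<tau> where "\<tau> = (\<lambda>v. B s (sig N (Binv s v)))"
  have lin: "linear N" by (rule NV_basic(1)[OF N])
  have key1: "N (es s (em v)) = - es s (em (\<tau> v))" for v
  proof -
    have "es s (em v) = JJ (Binv s v) (es s qone)" by (simp add: JJ_es)
    hence "N (es s (em v)) = JJ (sig N (Binv s v)) (N (es s qone))" by (simp add: NV_inter[OF N])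
    also have "\<dots> = - es s (em (\<tau> v))" by (simp add: NX JJ_x_neg JJ_es \<tau>_def)
    finally show ?thesis .
  qed
  have E: "(v\<bullet>v') *\<^sub>R qone - em (\<tau> (cross3 v v')) = (\<tau> v \<bullet> \<tau> v') *\<^sub>R qone - em (cross3 (\<tau> v) (\<tau> v'))" for v v'
  proof -
    have "JJ (Binv s v) (JJ (Binv s v') (es s qone)) = es s (qmult (em v) (em v'))" by (simp add: JJ_es)
    hence "N (es s (qmult (em v) (em v'))) = JJ (sig N (Binv s v)) (JJ (sig N (Binv s v')) (N (es s qone)))"
      by (metis NV_inter[OF N])
    also have "\<dots> = - es s (qmult (em (\<tau> v)) (em (\<tau> v')))" by (simp add: NX JJ_x_neg JJ_es \<tau>_def)
    finally have 1: "N (es s (qmult (em v) (em v'))) = - es s (qmult (em (\<tau> v)) (em (\<tau> v')))" .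
    have "N (es s (qmult (em v) (em v'))) = N ((- (v\<bullet>v')) *\<^sub>R es s qone + es s (em (cross3 v v')))"
      by (simp only: qmult_em_em es_add es_scale)
    also have "\<dots> = (- (v\<bullet>v')) *\<^sub>R N (es s qone) + N (es s (em (cross3 v v')))"
      by (simp only: linear_add[OF lin] linear_cmul[OF lin])
    also have "\<dots> = (v\<bullet>v') *\<^sub>R es s qone - es s (em (\<tau> (cross3 v v')))" by (simp add: NX key1)
    finally have 2: "(v\<bullet>v') *\<^sub>R es s qone - es s (em (\<tau> (cross3 v v'))) = - es s (qmult (em (\<tau> v)) (em (\<tau> v')))"
      using 1 by simp
    have "((v\<bullet>v') *\<^sub>R es s qone - es s (em (\<tau> (cross3 v v')))) $ s = (- es s (qmult (em (\<tau> v)) (em (\<tau> v')))) $ s"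
      using 2 by simp
    thus ?thesis by (simp add: es_nth qmult_em_em)
  qed
  show "\<tau> a \<bullet> \<tau> b = a \<bullet> b" for a b
    using arg_cong[OF E[of a b], of "\<lambda>x. x $ 1"] by simp
  show "\<tau> (cross3 a b) = cross3 (\<tau> a) (\<tau> b)" for a b
  proof -
    have "a \<bullet> b = \<tau> a \<bullet> \<tau> b" using arg_cong[OF E[of a b], of "\<lambda>x. x $ 1"] by simp
    hence "em (\<tau> (cross3 a b)) = em (cross3 (\<tau> a) (\<tau> b))" using E[of a b] by simp
    thus ?thesis by (rule em_inj)
  qed
  show "gs s (\<tau> a) (\<tau> b) = gs s a b" for a b
    by (simp add: \<tau>_def gs_def NV_basic(5)[OF N])
qed

lemma stepA_hyp:
  assumes u0: "u \<noteq> 0"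
  shows "\<exists>c. c\<bullet>c = 1 \<and> c\<bullet>u = 0 \<and> (\<forall>x. x\<bullet>c = 0 \<longrightarrow> gs s c x = 0)"
proof -
  obtain N where N: "N \<in> NV VV ip" "N (es s qone) = - es s qone" "sig N (Binv s u) = - Binv s u"
    using WS_get by blast
  define \<tau> where "\<tau> = (\<lambda>v. B s (sig N (Binv s v)))"
  have tu: "\<tau> u = - u" by (simp add: \<tau>_def N(3) linear_neg[OF B_lin])
  have tinn: "\<And>a b. \<tau> a \<bullet> \<tau> b = a \<bullet> b" unfolding \<tau>_def by (rule block_tau(1)[OF N(1,2)])
  have tcr: "\<And>a b. \<tau> (cross3 a b) = cross3 (\<tau> a) (\<tau> b)" unfolding \<tau>_def by (rule block_tau(2)[OF N(1,2)])
  obtain c where c: "c\<bullet>c = 1" "c\<bullet>u = 0" "\<tau> c = c" "\<forall>x. x\<bullet>c = 0 \<longrightarrow> \<tau> x = - x"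
    using rot_fixed[OF tinn tcr tu u0] by blast
  show ?thesis
  proof (intro exI conjI allI impI)
    fix x assume "x\<bullet>c = 0"
    hence "\<tau> x = - x" using c by blast
    hence "gs s c x = gs s c (- x)" using block_tau(3)[OF N(1,2), of c x] c(3) unfolding \<tau>_def by simp
    thus "gs s c x = 0" by (simp add: gs_neg)
  qed (use c in auto)
qed

lemma eig:
  assumes N: "N \<in> NV VV ip"
  shows "\<exists>u. B t (sig N W) \<bullet> B t (sig N W) = B u W \<bullet> B u W"
proof -
  define q where "q = B t (sig N W) \<bullet> B t (sig N W)"
  define y where "y = es t qone"
  define x where "x = inv N y"
  have Nx: "N x = y" unfolding x_def by (rule surj_f_inv_f[OF NV_basic(3)[OF N]])
  have lin: "linear N" by (rule NV_basic(1)[OF N])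
  have D: "JJ V (JJ V z) = (\<chi> u. (- (B u V \<bullet> B u V)) *\<^sub>R z $ u)" for V z
    by (simp add: vec_eq_iff JJ_nth qmult_em_em_x)
  have "N (JJ W (JJ W x)) = JJ (sig N W) (JJ (sig N W) y)" by (simp add: NV_inter[OF N] Nx)
  also have "\<dots> = (- q) *\<^sub>R y" by (simp add: D y_def q_def vec_eq_iff es_nth)
  also have "\<dots> = N ((- q) *\<^sub>R x)" by (simp only: linear_cmul[OF lin] Nx)
  finally have eq: "JJ W (JJ W x) = (- q) *\<^sub>R x" using NV_basic(2)[OF N] injD by metis
  have "x \<noteq> 0"
  proof
    assume "x = 0"
    hence "y = 0" using Nx linear_0[OF lin] by simp
    hence "y $ t = 0" by simp
    thus False by (simp add: y_def es_nth q4eq)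
  qed
  then obtain u where u: "x $ u \<noteq> 0" by (auto simp: vec_eq_iff)
  have "(JJ W (JJ W x)) $ u = ((- q) *\<^sub>R x) $ u" by (simp only: eq)
  hence "(- (B u W \<bullet> B u W)) *\<^sub>R x $ u = (- q) *\<^sub>R x $ u" by (simp only: D vec_lambda_beta vector_scaleR_component)
  hence "B u W \<bullet> B u W = q" using u by simp
  thus ?thesis unfolding q_def by (intro exI[of _ u]) (rule sym)
qed

end


context WSsetup begin

definition Rf :: "real^3 \<Rightarrow> real^3 \<Rightarrow> real^3" where "Rf c y = (2 * (y\<bullet>c)) *\<^sub>R c - y"

lemma reflect_step:
  assumes fr: "c1\<bullet>c1 = 1" "c2\<bullet>c2 = 1" "c3\<bullet>c3 = 1" "c1\<bullet>c2 = 0" "c1\<bullet>c3 = 0" "c2\<bullet>c3 = 0"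
    and gd: "gs s c1 c2 = 0" "gs s c1 c3 = 0" "gs s c2 c3 = 0" "gs s c2 c2 = gs s c3 c3"
    and gne: "gs s c1 c1 \<noteq> gs s c2 c2"
    and c: "c\<bullet>c = 1" "c\<bullet>c1 = 0"
  shows "\<exists>u. B t (Binv s (Rf c y)) \<bullet> B t (Binv s (Rf c y)) = B u (Binv s y) \<bullet> B u (Binv s y)"
proof -
  define uu where "uu = c1 + cross3 c c1"
  obtain N where N: "N \<in> NV VV ip" "N (es s qone) = - es s qone" "sig N (Binv s uu) = - Binv s uu"
    using WS_get by blast
  define \<tau> where "\<tau> = (\<lambda>v. B s (sig N (Binv s v)))"
  have tu: "\<tau> uu = - uu" by (simp add: \<tau>_def N(3) linear_neg[OF B_lin])
  have tinn: "\<And>a b. \<tau> a \<bullet> \<tau> b = a \<bullet> b" unfolding \<tau>_def by (rule block_tau(1)[OF N(1,2)])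
  have tcr: "\<And>a b. \<tau> (cross3 a b) = cross3 (\<tau> a) (\<tau> b)" unfolding \<tau>_def by (rule block_tau(2)[OF N(1,2)])
  have tg: "\<And>a b. gs s (\<tau> a) (\<tau> b) = gs s a b" unfolding \<tau>_def by (rule block_tau(3)[OF N(1,2)])
  have tr: "\<tau> y = Rf c y"
    unfolding Rf_def by (rule tau_is_refl[OF tinn tcr gs_lin gs_sym fr gd gne tg c tu[unfolded uu_def]])
  have "sig N (Binv s y) = Binv s (\<tau> y)" by (simp add: \<tau>_def)
  hence "B t (Binv s (Rf c y)) = B t (sig N (Binv s y))" by (simp add: tr)
  thus ?thesis using eig[OF N(1), of t "Binv s y"] by simp
qed

lemma stepB:
  assumes fr: "c1\<bullet>c1 = 1" "c2\<bullet>c2 = 1" "c3\<bullet>c3 = 1" "c1\<bullet>c2 = 0" "c1\<bullet>c3 = 0" "c2\<bullet>c3 = 0"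
    and gd: "gs s c1 c2 = 0" "gs s c1 c3 = 0" "gs s c2 c3 = 0" "gs s c2 c2 = gs s c3 c3"
    and gne: "gs s c1 c1 \<noteq> gs s c2 c2"
  shows "B t (Binv s c1) \<bullet> B t (Binv s c2) = 0 \<and> B t (Binv s c1) \<bullet> B t (Binv s c3) = 0 \<and>
         B t (Binv s c2) \<bullet> B t (Binv s c3) = 0 \<and> B t (Binv s c2) \<bullet> B t (Binv s c2) = B t (Binv s c3) \<bullet> B t (Binv s c3)"
proof -
  define M where "M = (\<lambda>v. B t (Binv s v))"
  have Mlin: "linear M" unfolding M_def using linear_compose[OF Binv_lin B_lin] by (simp add: comp_def)
  define Q where "Q = (\<lambda>v. M v \<bullet> M v)"
  define cc where "cc = (\<lambda>\<theta>::real. cos \<theta> *\<^sub>R c2 + sin \<theta> *\<^sub>R c3)"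
  have cc1: "cc \<theta> \<bullet> cc \<theta> = 1" for \<theta>
  proof -
    have "cc \<theta> \<bullet> cc \<theta> = (cos \<theta>)^2 + (sin \<theta>)^2"
      using fr by (simp add: cc_def inner_add_left inner_add_right inner_commute power2_eq_square)
    thus ?thesis by simp
  qed
  have cc2: "cc \<theta> \<bullet> c1 = 0" for \<theta> using fr by (simp add: cc_def inner_add_left inner_add_right inner_commute)
  have inv: "Q (Rf (cc \<theta>) y) \<in> range (\<lambda>u. B u (Binv s y) \<bullet> B u (Binv s y))" for \<theta> y
    using reflect_step[OF fr gd gne cc1 cc2, where t=t and y=y] unfolding Q_def M_def by auto
  have const: "Q (Rf (cc (pi/4)) y) = Q (Rf (cc 0) y)" for y
  proof -
    define f where "f = (\<lambda>\<theta>. Q (Rf (cc \<theta>) y))"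
    have cg: "continuous_on UNIV (\<lambda>\<theta>. Rf (cc \<theta>) y)"
      unfolding Rf_def cc_def by (intro continuous_intros)
    have cM: "\<And>S. continuous_on S M"
      by (rule linear_continuous_on) (rule linear_conv_bounded_linear[THEN iffD1, OF Mlin])
    have cMg: "continuous_on UNIV (\<lambda>\<theta>. M (Rf (cc \<theta>) y))"
      using continuous_on_compose[OF cg, of M] cM by (simp add: comp_def)
    have cf: "continuous_on UNIV f" unfolding f_def Q_def
      by (intro continuous_on_inner cMg)
    have fin: "finite (f ` UNIV)"
    proof (rule finite_subset)
      show "f ` UNIV \<subseteq> range (\<lambda>u. B u (Binv s y) \<bullet> B u (Binv s y))" using inv by (auto simp: f_def)
      show "finite (range (\<lambda>u. B u (Binv s y) \<bullet> B u (Binv s y)))" by simp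
    qed
    have "f constant_on UNIV" by (rule continuous_finite_range_constant[OF connected_UNIV cf fin])
    then obtain k where "\<forall>x. f x = k" unfolding constant_on_def by blast
    thus ?thesis unfolding f_def by metis
  qed
  have c0: "cc 0 = c2" by (simp add: cc_def)
  have c45: "Rf (cc (pi/4)) y = (y \<bullet> (c2 + c3)) *\<^sub>R (c2 + c3) - y" for y
  proof -
    define k :: real where "k = sqrt 2 / 2"
    have kk: "2 * k * k = 1" by (simp add: k_def)
    have kc: "cc (pi/4) = k *\<^sub>R (c2 + c3)" by (simp add: cc_def cos_45 sin_45 scaleR_add_right k_def)
    have "Rf (cc (pi/4)) y = ((2 * k * k) * (y \<bullet> (c2 + c3))) *\<^sub>R (c2 + c3) - y"
      by (simp only: kc Rf_def inner_scaleR_right scaleR_scaleR) (simp add: algebra_simps)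
    thus ?thesis by (simp only: kk) simp
  qed
  define \<rho> where "\<rho> = (\<lambda>x. Rf (cc (pi/4)) (Rf c2 x))"
  have invol: "Rf c2 (Rf c2 x) = x" for x using fr by (simp add: Rf_def inner_diff_left algebra_simps)
  have Qrho: "Q (\<rho> x) = Q x" for x using const[of "Rf c2 x"] by (simp add: \<rho>_def c0 invol)
  have rho_add: "\<rho> (x + y) = \<rho> x + \<rho> y" for x y
    by (simp add: \<rho>_def c45 Rf_def inner_add_left inner_diff_left algebra_simps)
  have rho_neg: "\<rho> (- x) = - \<rho> x" for x
    by (simp add: \<rho>_def c45 Rf_def inner_diff_left algebra_simps)
  have t2: "\<And>x::real^3. x * 2 = 2 *\<^sub>R x" by (simp add: vec_eq_iff)
  have r1: "\<rho> c1 = c1" using fr by (simp only: \<rho>_def c45) (simp add: Rf_def inner_add_right inner_add_left inner_diff_left inner_commute algebra_simps t2)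
  have r2: "\<rho> c2 = c3" using fr by (simp only: \<rho>_def c45) (simp add: Rf_def inner_add_right inner_add_left inner_diff_left inner_commute algebra_simps t2)
  have r3: "\<rho> c3 = - c2" using fr by (simp only: \<rho>_def c45) (simp add: Rf_def inner_add_right inner_add_left inner_diff_left inner_commute algebra_simps t2)
  have Qadd: "Q (x + y) = Q x + 2 * (M x \<bullet> M y) + Q y" for x y
    by (simp add: Q_def linear_add[OF Mlin] inner_add_left inner_add_right inner_commute)
  have pol: "M (\<rho> x) \<bullet> M (\<rho> y) = M x \<bullet> M y" for x y
  proof -
    have "Q (\<rho> x + \<rho> y) = Q (x + y)" using Qrho[of "x+y"] by (simp add: rho_add)
    thus ?thesis using Qadd[of "\<rho> x" "\<rho> y"] Qadd[of x y] Qrho[of x] Qrho[of y] by simp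
  qed
  have Mneg: "M (- x) = - M x" for x by (rule linear_neg[OF Mlin])
  have e23: "M c2 \<bullet> M c3 = 0" using pol[of c2 c3] by (simp add: r2 r3 Mneg inner_commute)
  have e12: "M c1 \<bullet> M c3 = M c1 \<bullet> M c2" using pol[of c1 c2] by (simp add: r1 r2)
  have e13: "M c1 \<bullet> M c2 = - (M c1 \<bullet> M c3)" using pol[of c1 c3] by (simp add: r1 r3 Mneg)
  have e22: "M c3 \<bullet> M c3 = M c2 \<bullet> M c2" using pol[of c2 c2] by (simp add: r2)
  show ?thesis using e23 e12 e13 e22 unfolding M_def by linarith
qed

end


lemma scalar_of_frame:
  fixes g :: "real^3 \<Rightarrow> real^3 \<Rightarrow> real"
  assumes lin: "\<And>x y z r s. g x (r *\<^sub>R y + s *\<^sub>R z) = r * g x y + s * g x z"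
    and sym: "\<And>x y. g x y = g y x"
    and fr: "c1\<bullet>c1 = 1" "c2\<bullet>c2 = 1" "c3\<bullet>c3 = 1" "c1\<bullet>c2 = 0" "c1\<bullet>c3 = 0" "c2\<bullet>c3 = 0"
    and gd: "g c1 c2 = 0" "g c1 c3 = 0" "g c2 c3 = 0" "g c2 c2 = g c3 c3" "g c1 c1 = g c2 c2"
  shows "g a b = g c1 c1 * (a \<bullet> b)"
proof -
  have "a\<bullet>b = (a\<bullet>c1)*(b\<bullet>c1) + (a\<bullet>c2)*(b\<bullet>c2) + (a\<bullet>c3)*(b\<bullet>c3)"
    by (subst (1) frame_expand[OF fr, of a]) (simp add: inner_add_left inner_add_right inner_commute)
  thus ?thesis using g_frame_expand[OF lin sym fr gd(1-3), of a b] gd(4,5) by (simp add: algebra_simps)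
qed

context WSsetup begin

lemma Binv_nz: "c \<noteq> 0 \<Longrightarrow> Binv s c \<noteq> 0"
  by (metis B_Binv linear_0[OF B_lin])

lemma frame_span:
  assumes fr: "c1\<bullet>c1 = 1" "c2\<bullet>c2 = 1" "c3\<bullet>c3 = 1" "c1\<bullet>c2 = 0" "c1\<bullet>c3 = 0" "c2\<bullet>c3 = 0"
  shows "\<exists>a b c. Z = a *\<^sub>R Binv s c1 + b *\<^sub>R Binv s c2 + c *\<^sub>R Binv s c3"
proof -
  have "Z = Binv s (B s Z)" by simp
  also have "\<dots> = Binv s ((B s Z \<bullet> c1) *\<^sub>R c1 + (B s Z \<bullet> c2) *\<^sub>R c2 + (B s Z \<bullet> c3) *\<^sub>R c3)"
    using frame_expand[OF fr, of "B s Z"] by simp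
  also have "\<dots> = (B s Z \<bullet> c1) *\<^sub>R Binv s c1 + (B s Z \<bullet> c2) *\<^sub>R Binv s c2 + (B s Z \<bullet> c3) *\<^sub>R Binv s c3"
    by (simp add: linear_add[OF Binv_lin] linear_cmul[OF Binv_lin])
  finally show ?thesis by blast
qed

lemma frame_exists:
  "\<exists>Z1 Z2 Z3. zi Z1 Z2 = 0 \<and> zi Z1 Z3 = 0 \<and> zi Z2 Z3 = 0 \<and> zi Z2 Z2 = zi Z3 Z3 \<and>
     (\<forall>t. B t Z1 \<bullet> B t Z2 = 0 \<and> B t Z1 \<bullet> B t Z3 = 0 \<and> B t Z2 \<bullet> B t Z3 = 0 \<and> B t Z2 \<bullet> B t Z2 = B t Z3 \<bullet> B t Z3) \<and>
     (\<forall>Z. \<exists>a b c. Z = a *\<^sub>R Z1 + b *\<^sub>R Z2 + c *\<^sub>R Z3) \<and> Z1 \<noteq> 0 \<and> Z2 \<noteq> 0 \<and> Z3 \<noteq> 0"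
proof -
  have fr_s: "\<exists>c1 c2 c3. c1\<bullet>c1 = 1 \<and> c2\<bullet>c2 = 1 \<and> c3\<bullet>c3 = 1 \<and> c1\<bullet>c2 = 0 \<and> c1\<bullet>c3 = 0 \<and> c2\<bullet>c3 = 0
     \<and> gs s c1 c2 = 0 \<and> gs s c1 c3 = 0 \<and> gs s c2 c3 = 0 \<and> gs s c2 c2 = gs s c3 c3" for s
    by (rule stepA_alg[OF gs_lin gs_sym stepA_hyp])
  have nz: "c\<bullet>c = 1 \<Longrightarrow> c \<noteq> 0" for c :: "real^3" by auto
  show ?thesis
  proof (cases "\<exists>s c1 c2 c3. c1\<bullet>c1 = 1 \<and> c2\<bullet>c2 = 1 \<and> c3\<bullet>c3 = 1 \<and> c1\<bullet>c2 = 0 \<and> c1\<bullet>c3 = 0 \<and> c2\<bullet>c3 = 0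
     \<and> gs s c1 c2 = 0 \<and> gs s c1 c3 = 0 \<and> gs s c2 c3 = 0 \<and> gs s c2 c2 = gs s c3 c3 \<and> gs s c1 c1 \<noteq> gs s c2 c2")
    case True
    then obtain s c1 c2 c3 where fr: "c1\<bullet>c1 = 1" "c2\<bullet>c2 = 1" "c3\<bullet>c3 = 1" "c1\<bullet>c2 = 0" "c1\<bullet>c3 = 0" "c2\<bullet>c3 = 0"
      and gd: "gs s c1 c2 = 0" "gs s c1 c3 = 0" "gs s c2 c3 = 0" "gs s c2 c2 = gs s c3 c3" and gne: "gs s c1 c1 \<noteq> gs s c2 c2"
      by blast
    show ?thesis
      apply (rule exI[of _ "Binv s c1"], rule exI[of _ "Binv s c2"], rule exI[of _ "Binv s c3"])
      using gd stepB[OF fr gd gne] frame_span[OF fr] Binv_nz nz fr by (simp add: gs_def[symmetric])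
  next
    case False
    have scal: "\<exists>l>0. \<forall>a b. gs t a b = l * (a \<bullet> b)" for t
    proof -
      obtain c1 c2 c3 where fr: "c1\<bullet>c1 = 1" "c2\<bullet>c2 = 1" "c3\<bullet>c3 = 1" "c1\<bullet>c2 = 0" "c1\<bullet>c3 = 0" "c2\<bullet>c3 = 0"
        and gd: "gs t c1 c2 = 0" "gs t c1 c3 = 0" "gs t c2 c3 = 0" "gs t c2 c2 = gs t c3 c3"
        using fr_s[of t] by blast
      have e: "gs t c1 c1 = gs t c2 c2" using False fr gd by blast
      have pos: "gs t c1 c1 > 0" unfolding gs_def by (rule zi_pos, rule Binv_nz, rule nz, rule fr(1))
      show ?thesis using scalar_of_frame[OF gs_lin gs_sym fr gd e] pos by blast
    qed
    fix s0 :: 'p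
    obtain c1 c2 c3 where fr: "c1\<bullet>c1 = 1" "c2\<bullet>c2 = 1" "c3\<bullet>c3 = 1" "c1\<bullet>c2 = 0" "c1\<bullet>c3 = 0" "c2\<bullet>c3 = 0"
      and gd: "gs s0 c1 c2 = 0" "gs s0 c1 c3 = 0" "gs s0 c2 c3 = 0" "gs s0 c2 c2 = gs s0 c3 c3"
      using fr_s[of s0] by blast
    define Z1 Z2 Z3 where zz: "Z1 = Binv s0 c1" "Z2 = Binv s0 c2" "Z3 = Binv s0 c3"
    have zd: "zi Z1 Z2 = 0" "zi Z1 Z3 = 0" "zi Z2 Z3 = 0" "zi Z2 Z2 = zi Z3 Z3"
      using gd by (simp_all add: zz gs_def)
    have bt: "B t Za \<bullet> B t Zb = zi Za Zb / l" if "l > 0" "\<forall>a b. gs t a b = l * (a \<bullet> b)" for t Za Zb l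
    proof -
      have "zi Za Zb = gs t (B t Za) (B t Zb)" by (simp add: gs_def)
      also have "\<dots> = l * (B t Za \<bullet> B t Zb)" using that by blast
      finally show ?thesis using that(1) by simp
    qed
    have tt: "\<forall>t. B t Z1 \<bullet> B t Z2 = 0 \<and> B t Z1 \<bullet> B t Z3 = 0 \<and> B t Z2 \<bullet> B t Z3 = 0 \<and> B t Z2 \<bullet> B t Z2 = B t Z3 \<bullet> B t Z3"
    proof
      fix t
      obtain l where l: "l > 0" "\<forall>a b. gs t a b = l * (a \<bullet> b)" using scal[of t] by blast
      show "B t Z1 \<bullet> B t Z2 = 0 \<and> B t Z1 \<bullet> B t Z3 = 0 \<and> B t Z2 \<bullet> B t Z3 = 0 \<and> B t Z2 \<bullet> B t Z2 = B t Z3 \<bullet> B t Z3"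
        using bt[OF l] zd by simp
    qed
    show ?thesis
      apply (rule exI[of _ Z1], rule exI[of _ Z2], rule exI[of _ Z3])
      using zd tt frame_span[OF fr] Binv_nz nz fr by (simp add: zz)
  qed
qed

end


lemma qijk_em: "qi = em qI" "qj = em qJ" "qk = em qK"
  by (simp_all add: q4eq qi_def qj_def qk_def qI_def qJ_def qK_def axis_def)

context WSsetup begin

lemma rot_data:
  assumes o: "B t Z1 \<bullet> B t Z2 = 0" "B t Z1 \<bullet> B t Z3 = 0" "B t Z2 \<bullet> B t Z3 = 0" "B t Z2 \<bullet> B t Z2 = B t Z3 \<bullet> B t Z3"
    and nz: "Z1 \<noteq> 0" "Z2 \<noteq> 0"
  shows "\<exists>x::(real^4) \<times> real \<times> real. fst x \<bullet> fst x = 1 \<and> fst (snd x) \<noteq> 0 \<and> snd (snd x) \<noteq> 0 \<and>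
     qmult (fst x) (em (B t Z1)) = qmult (em (fst (snd x) *\<^sub>R qI)) (fst x) \<and>
     qmult (fst x) (em (B t Z2)) = qmult (em (snd (snd x) *\<^sub>R qJ)) (fst x) \<and>
     qmult (fst x) (em (B t Z3)) = qmult (em (snd (snd x) *\<^sub>R qK)) (fst x)"
proof -
  define b1 b2 b3 where bb: "b1 = B t Z1" "b2 = B t Z2" "b3 = B t Z3"
  have b1nz: "b1 \<noteq> 0" using nz(1) B_inj linear_0[OF B_lin] bb by (metis injD)
  have b2nz: "b2 \<noteq> 0" using nz(2) B_inj linear_0[OF B_lin] bb by (metis injD)
  define mu where "mu = norm b2"
  have mu0: "mu > 0" using b2nz by (simp add: mu_def)
  define a2 a3 where aa: "a2 = b2 /\<^sub>R mu" "a3 = b3 /\<^sub>R mu"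
  have mm: "mu * mu = b2 \<bullet> b2" by (simp add: mu_def dot_square_norm power2_eq_square)
  have a22: "a2\<bullet>a2 = 1" using mu0 by (simp add: aa mm[symmetric] field_simps)
  have mm3: "b3\<bullet>b3 = mu * mu" using mm o(4) by (simp add: bb)
  have a33: "a3\<bullet>a3 = 1" using mu0 by (simp add: aa mm3 field_simps)
  have a23: "a2\<bullet>a3 = 0" using o(3) by (simp add: aa bb)
  obtain u where u: "u\<bullet>u = 1" "qmult u (em a2) = qmult (em qJ) u" "qmult u (em a3) = qmult (em qK) u"
    using rot_frame[OF a22 a33 a23] by blast
  define r where "r = qrot u b1"
  have q2: "qrot u a2 = qJ" by (rule intertwine_qrot[OF u(1,2)])
  have q3: "qrot u a3 = qK" by (rule intertwine_qrot[OF u(1,3)])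
  have rJ: "r\<bullet>qJ = 0" using qrot_inner[OF u(1), of b1 a2] q2 o(1) by (simp add: r_def aa bb)
  have rK: "r\<bullet>qK = 0" using qrot_inner[OF u(1), of b1 a3] q3 o(2) by (simp add: r_def aa bb)
  have r23: "r$2 = 0" "r$3 = 0" using rJ rK by (simp_all add: qJ_def qK_def inner_axis)
  have rI: "r = (r$1) *\<^sub>R qI" using r23 by (simp add: q3eq qI_def axis_def)
  have rr: "r\<bullet>r = b1\<bullet>b1" using qrot_inner[OF u(1), of b1 b1] by (simp add: r_def)
  have l0: "r$1 \<noteq> 0"
  proof
    assume "r$1 = 0"
    hence "r = 0" using rI by simp
    hence "b1\<bullet>b1 = 0" using rr by simp
    thus False using b1nz by simp
  qed
  have e1: "qmult u (em b1) = qmult (em ((r$1) *\<^sub>R qI)) u"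
    using qrot_intertwine[OF u(1), of b1] rI by (simp add: r_def)
  have b2a: "b2 = mu *\<^sub>R a2" "b3 = mu *\<^sub>R a3" using mu0 by (simp_all add: aa)
  have e2: "qmult u (em b2) = qmult (em (mu *\<^sub>R qJ)) u"
    by (simp add: b2a em_scaleR qmult_scaleR_right qmult_scaleR_left u(2))
  have e3: "qmult u (em b3) = qmult (em (mu *\<^sub>R qK)) u"
    by (simp add: b2a em_scaleR qmult_scaleR_right qmult_scaleR_left u(3))
  show ?thesis
    apply (rule exI[of _ "(u, r$1, mu)"])
    using u(1) l0 mu0 e1 e2 e3 by (simp add: bb)
qed

end


context WSsetup begin

lemma main_concl:
  "\<exists>\<phi> :: 'p \<Rightarrow> real^4 \<Rightarrow> real^4. \<exists>lam \<mu> :: 'p \<Rightarrow> real.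
     (\<forall>s. orthogonal_transformation (\<phi> s) \<and> (\<forall>x q. \<phi> s (qmult x q) = qmult (\<phi> s x) q)) \<and>
     (\<forall>s. lam s \<noteq> 0 \<and> \<mu> s \<noteq> 0) \<and>
     (let \<Phi> = qdiag \<phi>;
          J1 = qdiag (\<lambda>s. Lq (lam s *\<^sub>R qi));
          J2 = qdiag (\<lambda>s. Lq (\<mu> s *\<^sub>R qj));
          J3 = qdiag (\<lambda>s. Lq (\<mu> s *\<^sub>R qk));
          ip' = (\<lambda>J K. ip (inv \<Phi> \<circ> J \<circ> \<Phi>) (inv \<Phi> \<circ> K \<circ> \<Phi>))
      in {\<Phi> \<circ> K \<circ> inv \<Phi> | K. K \<in> {qdiag (\<lambda>s. Lq (A s Z)) | Z. True}}
           = {(\<lambda>x. a *\<^sub>R J1 x + b *\<^sub>R J2 x + c *\<^sub>R J3 x) | a b c. True} \<and>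
         ip' J1 J2 = 0 \<and> ip' J1 J3 = 0 \<and> ip' J2 J3 = 0 \<and> ip' J2 J2 = ip' J3 J3)"
proof -
  obtain Z1 Z2 Z3 where zd: "zi Z1 Z2 = 0" "zi Z1 Z3 = 0" "zi Z2 Z3 = 0" "zi Z2 Z2 = zi Z3 Z3"
    and tt: "\<And>t. B t Z1 \<bullet> B t Z2 = 0 \<and> B t Z1 \<bullet> B t Z3 = 0 \<and> B t Z2 \<bullet> B t Z3 = 0 \<and> B t Z2 \<bullet> B t Z2 = B t Z3 \<bullet> B t Z3"
    and sp: "\<And>Z. \<exists>a b c. Z = a *\<^sub>R Z1 + b *\<^sub>R Z2 + c *\<^sub>R Z3"
    and nz: "Z1 \<noteq> 0" "Z2 \<noteq> 0"
    using frame_exists by blast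
  have "\<forall>t. \<exists>x::(real^4) \<times> real \<times> real. fst x \<bullet> fst x = 1 \<and> fst (snd x) \<noteq> 0 \<and> snd (snd x) \<noteq> 0 \<and>
     qmult (fst x) (em (B t Z1)) = qmult (em (fst (snd x) *\<^sub>R qI)) (fst x) \<and>
     qmult (fst x) (em (B t Z2)) = qmult (em (snd (snd x) *\<^sub>R qJ)) (fst x) \<and>
     qmult (fst x) (em (B t Z3)) = qmult (em (snd (snd x) *\<^sub>R qK)) (fst x)"
    using rot_data tt nz by blast
  then obtain F where F: "\<And>t. fst (F t) \<bullet> fst (F t) = 1 \<and> fst (snd (F t)) \<noteq> 0 \<and> snd (snd (F t)) \<noteq> 0 \<and>
     qmult (fst (F t)) (em (B t Z1)) = qmult (em (fst (snd (F t)) *\<^sub>R qI)) (fst (F t)) \<and>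
     qmult (fst (F t)) (em (B t Z2)) = qmult (em (snd (snd (F t)) *\<^sub>R qJ)) (fst (F t)) \<and>
     qmult (fst (F t)) (em (B t Z3)) = qmult (em (snd (snd (F t)) *\<^sub>R qK)) (fst (F t))"
    by metis
  define U where "U t = fst (F t)" for t
  define LAM where "LAM t = fst (snd (F t))" for t
  define MU where "MU t = snd (snd (F t))" for t
  have Uu: "U t \<bullet> U t = 1" for t using F[of t] by (simp add: U_def)
  have LM: "LAM t \<noteq> 0 \<and> MU t \<noteq> 0" for t using F[of t] by (simp add: LAM_def MU_def)
  have I1: "qmult (U t) (em (B t Z1)) = qmult (em (LAM t *\<^sub>R qI)) (U t)" for t using F[of t] by (simp add: U_def LAM_def)
  have I2: "qmult (U t) (em (B t Z2)) = qmult (em (MU t *\<^sub>R qJ)) (U t)" for t using F[of t] by (simp add: U_def MU_def)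
  have I3: "qmult (U t) (em (B t Z3)) = qmult (em (MU t *\<^sub>R qK)) (U t)" for t using F[of t] by (simp add: U_def MU_def)
  define \<phi> where "\<phi> = (\<lambda>t x. qmult (U t) x)"
  define \<Phi> where "\<Phi> = qdiag \<phi>"
  define J1 where "J1 = qdiag (\<lambda>s. Lq (LAM s *\<^sub>R qi))"
  define J2 where "J2 = qdiag (\<lambda>s. Lq (MU s *\<^sub>R qj))"
  define J3 where "J3 = qdiag (\<lambda>s. Lq (MU s *\<^sub>R qk))"
  have phi_ot: "orthogonal_transformation (\<phi> t)" for t
    unfolding orthogonal_transformation
  proof
    show "linear (\<phi> t)" by (simp add: \<phi>_def linear_qmult_right)
    show "\<forall>v. norm (\<phi> t v) = norm v"
      by (simp add: \<phi>_def norm_eq_sqrt_inner norm_qmult_sq Uu)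
  qed
  have Phi_nth: "\<Phi> x $ t = qmult (U t) (x $ t)" for x t by (simp add: \<Phi>_def qdiag_def \<phi>_def)
  have Phi_ot: "orthogonal_transformation \<Phi>"
    unfolding orthogonal_transformation
  proof
    show "linear \<Phi>"
      by (rule linearI) (simp_all add: vec_eq_iff Phi_nth qmult_add_right qmult_scaleR_right)
    have "\<Phi> v \<bullet> \<Phi> v = v \<bullet> v" for v
    proof -
      have "\<Phi> v \<bullet> \<Phi> v = (\<Sum>i\<in>UNIV. \<Phi> v $ i \<bullet> \<Phi> v $ i)" by (rule inner_vec_def)
      also have "\<dots> = (\<Sum>i\<in>UNIV. v $ i \<bullet> v $ i)" by (simp only: Phi_nth norm_qmult_sq Uu) simp
      also have "\<dots> = v \<bullet> v" by (rule inner_vec_def[symmetric])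
      finally show ?thesis .
    qed
    thus "\<forall>v. norm (\<Phi> v) = norm v" by (simp add: norm_eq_sqrt_inner)
  qed
  have Phi_inv1: "inv \<Phi> (\<Phi> x) = x" for x using orthogonal_transformation_inj[OF Phi_ot] by (simp add: inv_f_f)
  have Phi_inv2: "\<Phi> (inv \<Phi> x) = x" for x using orthogonal_transformation_surj[OF Phi_ot] by (simp add: surj_f_inv_f)
  define JT where "JT a b c = (\<lambda>x. a *\<^sub>R J1 x + b *\<^sub>R J2 x + c *\<^sub>R J3 x)" for a b c
  have key: "\<Phi> (JJ (a *\<^sub>R Z1 + b *\<^sub>R Z2 + c *\<^sub>R Z3) x) = JT a b c (\<Phi> x)" for a b c x
  proof -
    have "\<Phi> (JJ (a *\<^sub>R Z1 + b *\<^sub>R Z2 + c *\<^sub>R Z3) x) $ t = JT a b c (\<Phi> x) $ t" for t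
    proof -
      let ?e1 = "em (B t Z1)" and ?e2 = "em (B t Z2)" and ?e3 = "em (B t Z3)"
      have "\<Phi> (JJ (a *\<^sub>R Z1 + b *\<^sub>R Z2 + c *\<^sub>R Z3) x) $ t
          = qmult (U t) (qmult (a *\<^sub>R ?e1 + b *\<^sub>R ?e2 + c *\<^sub>R ?e3) (x $ t))"
        by (simp add: Phi_nth JJ_nth linear_add[OF B_lin] linear_cmul[OF B_lin] em_add em_scaleR)
      also have "\<dots> = qmult (qmult (U t) (a *\<^sub>R ?e1 + b *\<^sub>R ?e2 + c *\<^sub>R ?e3)) (x $ t)"
        by (simp add: qmult_assoc)
      also have "qmult (U t) (a *\<^sub>R ?e1 + b *\<^sub>R ?e2 + c *\<^sub>R ?e3)
          = a *\<^sub>R qmult (em (LAM t *\<^sub>R qI)) (U t) + b *\<^sub>R qmult (em (MU t *\<^sub>R qJ)) (U t) + c *\<^sub>R qmult (em (MU t *\<^sub>R qK)) (U t)"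
        by (simp only: qmult_add_right qmult_scaleR_right I1 I2 I3)
      also have "qmult (a *\<^sub>R qmult (em (LAM t *\<^sub>R qI)) (U t) + b *\<^sub>R qmult (em (MU t *\<^sub>R qJ)) (U t) + c *\<^sub>R qmult (em (MU t *\<^sub>R qK)) (U t)) (x $ t)
          = a *\<^sub>R qmult (em (LAM t *\<^sub>R qI)) (\<Phi> x $ t) + b *\<^sub>R qmult (em (MU t *\<^sub>R qJ)) (\<Phi> x $ t) + c *\<^sub>R qmult (em (MU t *\<^sub>R qK)) (\<Phi> x $ t)"
        by (simp only: qmult_add_left qmult_scaleR_left qmult_assoc Phi_nth)
      also have "\<dots> = JT a b c (\<Phi> x) $ t"
        by (simp add: JT_def J1_def J2_def J3_def qdiag_def Lq_def qijk_em em_scaleR)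
      finally show ?thesis .
    qed
    thus ?thesis by (simp add: vec_eq_iff)
  qed
  have cj: "\<Phi> \<circ> JJ (a *\<^sub>R Z1 + b *\<^sub>R Z2 + c *\<^sub>R Z3) \<circ> inv \<Phi> = JT a b c" for a b c
    by (rule ext) (simp add: key Phi_inv2)
  have bk: "inv \<Phi> \<circ> JT a b c \<circ> \<Phi> = JJ (a *\<^sub>R Z1 + b *\<^sub>R Z2 + c *\<^sub>R Z3)" for a b c
    by (rule ext) (simp add: key[symmetric] Phi_inv1)
  have JT1: "J1 = JT 1 0 0" "J2 = JT 0 1 0" "J3 = JT 0 0 1" by (simp_all add: JT_def)
  have b1: "inv \<Phi> \<circ> J1 \<circ> \<Phi> = JJ Z1" using bk[of 1 0 0] by (simp add: JT1)
  have b2: "inv \<Phi> \<circ> J2 \<circ> \<Phi> = JJ Z2" using bk[of 0 1 0] by (simp add: JT1)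
  have b3: "inv \<Phi> \<circ> J3 \<circ> \<Phi> = JJ Z3" using bk[of 0 0 1] by (simp add: JT1)
  have seteq: "{\<Phi> \<circ> K \<circ> inv \<Phi> | K. K \<in> {qdiag (\<lambda>s. Lq (A s Z)) | Z. True}}
           = {(\<lambda>x. a *\<^sub>R J1 x + b *\<^sub>R J2 x + c *\<^sub>R J3 x) | a b c. True}"
  proof (intro equalityI subsetI)
    fix F assume "F \<in> {\<Phi> \<circ> K \<circ> inv \<Phi> | K. K \<in> {qdiag (\<lambda>s. Lq (A s Z)) | Z. True}}"
    then obtain Z where Fz: "F = \<Phi> \<circ> JJ Z \<circ> inv \<Phi>" by (auto simp: JJ_def)
    obtain a b c where "Z = a *\<^sub>R Z1 + b *\<^sub>R Z2 + c *\<^sub>R Z3" using sp by blast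
    hence "F = JT a b c" using Fz cj by simp
    thus "F \<in> {(\<lambda>x. a *\<^sub>R J1 x + b *\<^sub>R J2 x + c *\<^sub>R J3 x) | a b c. True}" by (auto simp: JT_def)
  next
    fix F assume "F \<in> {(\<lambda>x. a *\<^sub>R J1 x + b *\<^sub>R J2 x + c *\<^sub>R J3 x) | a b c. True}"
    then obtain a b c where "F = JT a b c" by (auto simp: JT_def)
    hence "F = \<Phi> \<circ> JJ (a *\<^sub>R Z1 + b *\<^sub>R Z2 + c *\<^sub>R Z3) \<circ> inv \<Phi>" using cj by simp
    thus "F \<in> {\<Phi> \<circ> K \<circ> inv \<Phi> | K. K \<in> {qdiag (\<lambda>s. Lq (A s Z)) | Z. True}}" using JJ_in by blast
  qed
  show ?thesis
    apply (rule exI[of _ \<phi>], rule exI[of _ LAM], rule exI[of _ MU])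
    unfolding Let_def \<Phi>_def[symmetric] J1_def[symmetric] J2_def[symmetric] J3_def[symmetric]
    using phi_ot LM seteq zd
    by (simp add: \<phi>_def qmult_assoc b1 b2 b3 zi_def[symmetric])
qed

end


theorem mainTheorem9:
  fixes A :: "'p::finite \<Rightarrow> 'z::euclidean_space \<Rightarrow> real^4"
    and ip :: "(real^4^'p \<Rightarrow> real^4^'p) \<Rightarrow> (real^4^'p \<Rightarrow> real^4^'p) \<Rightarrow> real"
  assumes dimz: "DIM('z) = 3"
    and A_lin: "\<And>s. linear (A s)"
    and A_inj: "\<And>s. inj (A s)"
    and A_onto: "\<And>s. range (A s) = ImH"
    and ip: "inner_product_on {qdiag (\<lambda>s. Lq (A s Z)) | Z. True} ip"
    and ws: "WS_pair {qdiag (\<lambda>s. Lq (A s Z)) | Z. True} ip"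
  shows "\<exists>\<phi> :: 'p \<Rightarrow> real^4 \<Rightarrow> real^4. \<exists>lam \<mu> :: 'p \<Rightarrow> real.
     (\<forall>s. orthogonal_transformation (\<phi> s) \<and> (\<forall>x q. \<phi> s (qmult x q) = qmult (\<phi> s x) q)) \<and>
     (\<forall>s. lam s \<noteq> 0 \<and> \<mu> s \<noteq> 0) \<and>
     (let \<Phi> = qdiag \<phi>;
          J1 = qdiag (\<lambda>s. Lq (lam s *\<^sub>R qi));
          J2 = qdiag (\<lambda>s. Lq (\<mu> s *\<^sub>R qj));
          J3 = qdiag (\<lambda>s. Lq (\<mu> s *\<^sub>R qk));
          ip' = (\<lambda>J K. ip (inv \<Phi> \<circ> J \<circ> \<Phi>) (inv \<Phi> \<circ> K \<circ> \<Phi>))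
      in {\<Phi> \<circ> K \<circ> inv \<Phi> | K. K \<in> {qdiag (\<lambda>s. Lq (A s Z)) | Z. True}}
           = {(\<lambda>x. a *\<^sub>R J1 x + b *\<^sub>R J2 x + c *\<^sub>R J3 x) | a b c. True} \<and>
         ip' J1 J2 = 0 \<and> ip' J1 J3 = 0 \<and> ip' J2 J3 = 0 \<and> ip' J2 J2 = ip' J3 J3)"
proof -
  interpret WSsetup A ip
    using A_lin A_inj A_onto ip ws by (simp add: WSsetup_def)
  show ?thesis by (rule main_concl)
qed

end
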